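(* Let $T\ge K\ge2$, $0<V\le T/K$, and let $W_1,\dots,W_N$ be positive integers with $\sum_j W_j=T$. Set $c=\frac18-\frac{\sqrt{\log(4/3)}}8$. Then for every policy $\pi$: (i) if $W_i\le K^{1/3}(T/V)^{2/3}$ for all $i\in[N]$, then $R^\pi(T;W,V)\ge \frac{c}{3}(KV)^{1/3}T^{2/3}$; (ii) if $W_i\ge K^{1/3}(T/V)^{2/3}$ for all $i\in[N]$, then $R^\pi(T;W,V)\ge c\sum_{i=1}^N\sqrt{KW_i}$.
   Context: Bandit model: arms $[K]=\{1,\dots,K\}$, horizon $T$; in period $t$ arm $k$ has a random reward $Y_{t,k}\in[0,1]$ with mean $\mu_{t,k}\in[0,1]$, independent across periods. A policy $\pi$ chooses $A_t\in[K]$, possibly with internal randomization, as a function only of $A_1,Y_{1,A_1},\dots,A_{t-1},Y_{t-1,A_{t-1}}$, and then observes $Y_{t,A_t}$. $\log$ is the natural logarithm. Window $j$ is $\mathcal W_j=\{\sum_{i<j}W_i+1,\dots,\sum_{i\le j}W_i\}$ and $\mu^*_{\mathcal W_j}=\frac1{W_j}\max_{k}\sum_{t\in\mathcal W_j}\mu_{t,k}$. Regret: $R^\pi(T;W,\{\mu_{t,k}\})=\sum_{j=1}^N W_j\mu^*_{\mathcal W_j}-\mathbb E[\sum_{t=1}^T\mu_{t,A_t}]$, and $R^\pi(T;W,V)=\sup R^\pi(T;W,\{\mu_{t,k}\})$ over all mean sequences $\{\mu_{t,k}\}\in[0,1]^{T\times K}$ with $\sum_{t=1}^{T-1}\max_k|\mu_{t,k}-\mu_{t+1,k}|\le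 V$ and all reward distributions on $[0,1]$ with those means (in particular Bernoulli rewards are allowed). *)

theory Defs
  imports "HOL-Probability.Probability"
begin

text \<open>Histories: list of (chosen arm, observed reward), oldest first.
  Arms are 1..K, periods are 1..T.
  An environment nu assigns to period t and arm k a reward distribution nu t k.\<close>

type_synonym history = "(nat \<times> real) list"
type_synonym policy = "history \<Rightarrow> nat pmf"
type_synonym env = "nat \<Rightarrow> nat \<Rightarrow> real pmf"

definition is_policy :: "nat \<Rightarrow> policy \<Rightarrow> bool" where
  "is_policy K \<pi> \<longleftrightarrow> (\<forall>h. set_pmf (\<pi> h) \<subseteq> {1..K})"

definition mean :: "env \<Rightarrow> nat \<Rightarrow> nat \<Rightarrow> real" where
  "mean \<nu> t k = measure_pmf.expectation (\<nu> t k) (\<lambda>y. y)"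

fun hist :: "policy \<Rightarrow> env \<Rightarrow> nat \<Rightarrow> history pmf" where
  "hist \<pi> \<nu> 0 = return_pmf []"
| "hist \<pi> \<nu> (Suc n) =
     bind_pmf (hist \<pi> \<nu> n) (\<lambda>h. bind_pmf (\<pi> h) (\<lambda>a.
       map_pmf (\<lambda>y. h @ [(a, y)]) (\<nu> (Suc n) a)))"

definition action :: "policy \<Rightarrow> env \<Rightarrow> nat \<Rightarrow> nat pmf" where
  "action \<pi> \<nu> t = bind_pmf (hist \<pi> \<nu> (t - 1)) \<pi>"

definition expected_reward :: "policy \<Rightarrow> env \<Rightarrow> nat \<Rightarrow> real" where
  "expected_reward \<pi> \<nu> T =
     (\<Sum>t=1..T. measure_pmf.expectation (action \<pi> \<nu> t) (\<lambda>a. mean \<nu> t a))"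

definition window :: "(nat \<Rightarrow> nat) \<Rightarrow> nat \<Rightarrow> nat set" where
  "window W j = {(\<Sum>i=1..<j. W i) + 1 .. (\<Sum>i=1..j. W i)}"

text \<open>Regret R^pi(T; W, {mu}) for the environment nu; note
  W_j * mu*_{W_j} = max_k sum_{t in W_j} mu_{t,k}.\<close>
definition regret :: "nat \<Rightarrow> nat \<Rightarrow> nat \<Rightarrow> (nat \<Rightarrow> nat) \<Rightarrow> policy \<Rightarrow> env \<Rightarrow> real" where
  "regret K T N W \<pi> \<nu> =
     (\<Sum>j=1..N. Max ((\<lambda>k. \<Sum>t\<in>window W j. mean \<nu> t k) ` {1..K}))
     - expected_reward \<pi> \<nu> T"

definition admissible :: "nat \<Rightarrow> nat \<Rightarrow> real \<Rightarrow> env \<Rightarrow> bool" where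
  "admissible K T V \<nu> \<longleftrightarrow>
     (\<forall>t\<in>{1..T}. \<forall>k\<in>{1..K}. set_pmf (\<nu> t k) \<subseteq> {0..1}) \<and>
     (\<Sum>t=1..<T. Max ((\<lambda>k. \<bar>mean \<nu> t k - mean \<nu> (t + 1) k\<bar>) ` {1..K})) \<le> V"

definition worst_regret :: "nat \<Rightarrow> nat \<Rightarrow> nat \<Rightarrow> (nat \<Rightarrow> nat) \<Rightarrow> real \<Rightarrow> policy \<Rightarrow> real" where
  "worst_regret K T N W V \<pi> = (SUP \<nu>\<in>{\<nu>. admissible K T V \<nu>}. regret K T N W \<pi> \<nu>)"

end

theory Submission
  imports Defs
begin


lemma exp_bind_fin:
  fixes g :: "'b \<Rightarrow> real"
  assumes "finite (set_pmf M)" "\<And>x. x \<in> set_pmf M \<Longrightarrow> finite (set_pmf (f x))"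
  shows "measure_pmf.expectation (bind_pmf M f) g =
         measure_pmf.expectation M (\<lambda>x. measure_pmf.expectation (f x) g)"
proof -
  let ?S = "\<Union>x\<in>set_pmf M. set_pmf (f x)"
  have fS: "finite ?S" using assms by auto
  have "measure_pmf.expectation (bind_pmf M f) g = (\<Sum>y\<in>?S. g y * pmf (bind_pmf M f) y)"
    by (rule integral_measure_pmf_real) (use fS in auto)
  also have "\<dots> = (\<Sum>y\<in>?S. g y * (\<Sum>x\<in>set_pmf M. pmf (f x) y * pmf M x))"
    by (intro sum.cong refl) (simp add: pmf_bind integral_measure_pmf_real[OF assms(1)])
  also have "\<dots> = (\<Sum>x\<in>set_pmf M. (\<Sum>y\<in>?S. g y * pmf (f x) y) * pmf M x)"
    by (simp add: sum_distrib_left sum_distrib_right sum.swap[of _ ?S] mult_ac)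
  also have "\<dots> = (\<Sum>x\<in>set_pmf M. measure_pmf.expectation (f x) g * pmf M x)"
    apply (intro sum.cong refl)
    apply (subst integral_measure_pmf_real[of ?S]) using fS by auto
  also have "\<dots> = measure_pmf.expectation M (\<lambda>x. measure_pmf.expectation (f x) g)"
    by (rule integral_measure_pmf_real[symmetric]) (use assms in auto)
  finally show ?thesis .
qed

definition KL0 :: "'a pmf \<Rightarrow> 'a pmf \<Rightarrow> real" where
  "KL0 P Q = measure_pmf.expectation P (\<lambda>x. ln (pmf P x / pmf Q x))"

lemma KL0_self: "KL0 P P = 0"
proof -
  have "KL0 P P = measure_pmf.expectation P (\<lambda>x. 0)"
    unfolding KL0_def by (intro integral_cong_AE) (auto simp: AE_measure_pmf_iff set_pmf_iff)
  thus ?thesis by simp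
qed

lemma pmf_bind_Pair:
  "pmf (bind_pmf M (\<lambda>x. map_pmf (Pair x) (f x))) (a, b) = pmf M a * pmf (f a) b"
proof -
  have "pmf (bind_pmf M (\<lambda>x. map_pmf (Pair x) (f x))) (a, b) =
        measure_pmf.expectation M (\<lambda>x. indicator {a} x * pmf (f a) b)"
    unfolding pmf_bind
    by (intro Bochner_Integration.integral_cong refl) (auto simp: indicator_def pmf_map vimage_def measure_pmf_single)
  also have "\<dots> = pmf M a * pmf (f a) b" by (simp add: measure_pmf_single)
  finally show ?thesis .
qed

lemma KL0_chain:
  assumes fin: "finite (set_pmf M0)" "\<And>x. finite (set_pmf (f0 x))"
    and sub: "set_pmf M0 \<subseteq> set_pmf M1" "\<And>x. x \<in> set_pmf M0 \<Longrightarrow> set_pmf (f0 x) \<subseteq> set_pmf (f1 x)"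
  shows "KL0 (bind_pmf M0 (\<lambda>x. map_pmf (Pair x) (f0 x))) (bind_pmf M1 (\<lambda>x. map_pmf (Pair x) (f1 x)))
       = KL0 M0 M1 + measure_pmf.expectation M0 (\<lambda>x. KL0 (f0 x) (f1 x))"
proof -
  let ?B0 = "bind_pmf M0 (\<lambda>x. map_pmf (Pair x) (f0 x))"
  let ?B1 = "bind_pmf M1 (\<lambda>x. map_pmf (Pair x) (f1 x))"
  have "KL0 ?B0 ?B1 = measure_pmf.expectation M0 (\<lambda>x. measure_pmf.expectation (f0 x)
          (\<lambda>y. ln (pmf ?B0 (x,y) / pmf ?B1 (x,y))))"
    unfolding KL0_def by (subst exp_bind_fin) (use fin in auto)
  also have "\<dots> = measure_pmf.expectation M0 (\<lambda>x. ln (pmf M0 x / pmf M1 x) + KL0 (f0 x) (f1 x))"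
  proof (intro integral_cong_AE, simp, simp, unfold AE_measure_pmf_iff, intro ballI)
    fix x assume x: "x \<in> set_pmf M0"
    have p0: "pmf M0 x > 0" "pmf M1 x > 0" using x sub(1) by (auto simp: pmf_positive)
    have "measure_pmf.expectation (f0 x) (\<lambda>y. ln (pmf ?B0 (x,y) / pmf ?B1 (x,y))) =
          measure_pmf.expectation (f0 x) (\<lambda>y. ln (pmf M0 x / pmf M1 x) + ln (pmf (f0 x) y / pmf (f1 x) y))"
    proof (intro integral_cong_AE, simp, simp, unfold AE_measure_pmf_iff, intro ballI)
      fix y assume y: "y \<in> set_pmf (f0 x)"
      have "pmf (f0 x) y > 0" "pmf (f1 x) y > 0" using y sub(2)[OF x] by (auto simp: pmf_positive)
      thus "ln (pmf ?B0 (x,y) / pmf ?B1 (x,y)) = ln (pmf M0 x / pmf M1 x) + ln (pmf (f0 x) y / pmf (f1 x) y)"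
        using p0 by (simp add: pmf_bind_Pair ln_mult ln_div)
    qed
    also have "\<dots> = ln (pmf M0 x / pmf M1 x) + KL0 (f0 x) (f1 x)"
      unfolding KL0_def
      by (subst Bochner_Integration.integral_add) (auto intro!: integrable_measure_pmf_finite fin)
    finally show "measure_pmf.expectation (f0 x) (\<lambda>y. ln (pmf ?B0 (x,y) / pmf ?B1 (x,y))) =
          ln (pmf M0 x / pmf M1 x) + KL0 (f0 x) (f1 x)" .
  qed
  also have "\<dots> = KL0 M0 M1 + measure_pmf.expectation M0 (\<lambda>x. KL0 (f0 x) (f1 x))"
    unfolding KL0_def
    by (subst Bochner_Integration.integral_add) (auto intro!: integrable_measure_pmf_finite fin)
  finally show ?thesis .
qed

lemma KL0_map_inj:
  assumes "inj g" "set_pmf P \<subseteq> set_pmf Q"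
  shows "KL0 (map_pmf g P) (map_pmf g Q) = KL0 P Q"
  unfolding KL0_def using assms by (simp add: pmf_map_inj')




lemma hist_Suc_pair:
  "hist \<pi> \<nu> (Suc n) = map_pmf (\<lambda>(h,(a,y)). h @ [(a,y)])
     (bind_pmf (hist \<pi> \<nu> n) (\<lambda>h. map_pmf (Pair h) (bind_pmf (\<pi> h) (\<lambda>a. map_pmf (Pair a) (\<nu> (Suc n) a)))))"
  by (simp add: map_bind_pmf map_pmf_comp)

lemma inj_snoc_pair: "inj (\<lambda>(h,(a,y)). h @ [(a,y)])"
  by (auto simp: inj_on_def)

lemma hist_finite:
  assumes "\<And>h. finite (set_pmf (\<pi> h))" "\<And>t a. finite (set_pmf (\<nu> t a))"
  shows "finite (set_pmf (hist \<pi> \<nu> n))"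
  by (induction n) (auto simp: assms)

lemma hist_set_eq:
  assumes "\<And>t a. set_pmf (\<nu>0 t a) = set_pmf (\<nu>1 t a)"
  shows "set_pmf (hist \<pi> \<nu>0 n) = set_pmf (hist \<pi> \<nu>1 n)"
  by (induction n) (auto simp: assms)

lemma hist_length: "h \<in> set_pmf (hist \<pi> \<nu> n) \<Longrightarrow> length h = n"
  by (induction n arbitrary: h) auto

lemma hist_agree:
  assumes "\<And>t. t \<in> {1..n} \<Longrightarrow> \<nu> t = \<nu>' t"
  shows "hist \<pi> \<nu> n = hist \<pi> \<nu>' n"
  using assms by (induction n) auto

lemma action_agree:
  assumes "\<And>t'. t' \<in> {1..<t} \<Longrightarrow> \<nu> t' = \<nu>' t'"
  shows "action \<pi> \<nu> t = action \<pi> \<nu>' t"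
  unfolding action_def by (subst hist_agree[of "t-1" \<nu> \<nu>']) (use assms in auto)

lemma KL0_hist_Suc:
  assumes fp: "\<And>h. finite (set_pmf (\<pi> h))" and fe: "\<And>t a. finite (set_pmf (\<nu>0 t a))"
    and se: "\<And>t a. set_pmf (\<nu>0 t a) = set_pmf (\<nu>1 t a)"
  shows "KL0 (hist \<pi> \<nu>0 (Suc n)) (hist \<pi> \<nu>1 (Suc n)) = KL0 (hist \<pi> \<nu>0 n) (hist \<pi> \<nu>1 n)
     + measure_pmf.expectation (action \<pi> \<nu>0 (Suc n)) (\<lambda>a. KL0 (\<nu>0 (Suc n) a) (\<nu>1 (Suc n) a))"
proof -
  have fh: "finite (set_pmf (hist \<pi> \<nu>0 n))" by (rule hist_finite) (use fp fe in auto)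
  have sh: "set_pmf (hist \<pi> \<nu>0 n) \<subseteq> set_pmf (hist \<pi> \<nu>1 n)" using hist_set_eq[OF se] by auto
  have inner: "KL0 (bind_pmf (\<pi> h) (\<lambda>a. map_pmf (Pair a) (\<nu>0 (Suc n) a)))
                  (bind_pmf (\<pi> h) (\<lambda>a. map_pmf (Pair a) (\<nu>1 (Suc n) a)))
     = measure_pmf.expectation (\<pi> h) (\<lambda>a. KL0 (\<nu>0 (Suc n) a) (\<nu>1 (Suc n) a))" for h
    by (subst KL0_chain) (use fp fe se in \<open>auto simp: KL0_self\<close>)
  have "KL0 (hist \<pi> \<nu>0 (Suc n)) (hist \<pi> \<nu>1 (Suc n)) =
     KL0 (hist \<pi> \<nu>0 n) (hist \<pi> \<nu>1 n) + measure_pmf.expectation (hist \<pi> \<nu>0 n)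
        (\<lambda>h. measure_pmf.expectation (\<pi> h) (\<lambda>a. KL0 (\<nu>0 (Suc n) a) (\<nu>1 (Suc n) a)))"
    unfolding hist_Suc_pair
    apply (subst KL0_map_inj[OF inj_snoc_pair])
     apply (use sh se in auto)[1]
    apply (subst KL0_chain)
    using fh sh fp fe se by (auto simp: inner)
  also have "measure_pmf.expectation (hist \<pi> \<nu>0 n)
        (\<lambda>h. measure_pmf.expectation (\<pi> h) (\<lambda>a. KL0 (\<nu>0 (Suc n) a) (\<nu>1 (Suc n) a)))
     = measure_pmf.expectation (action \<pi> \<nu>0 (Suc n)) (\<lambda>a. KL0 (\<nu>0 (Suc n) a) (\<nu>1 (Suc n) a))"
    unfolding action_def by (subst exp_bind_fin) (use fh fp in auto)
  finally show ?thesis .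
qed

lemma KL0_hist:
  assumes fp: "\<And>h. finite (set_pmf (\<pi> h))" and fe: "\<And>t a. finite (set_pmf (\<nu>0 t a))"
    and se: "\<And>t a. set_pmf (\<nu>0 t a) = set_pmf (\<nu>1 t a)"
  shows "KL0 (hist \<pi> \<nu>0 n) (hist \<pi> \<nu>1 n) =
    (\<Sum>t=1..n. measure_pmf.expectation (action \<pi> \<nu>0 t) (\<lambda>a. KL0 (\<nu>0 t a) (\<nu>1 t a)))"
proof (induction n)
  case 0 then show ?case by (simp add: KL0_self)
next
  case (Suc n) show ?case by (subst KL0_hist_Suc[OF fp fe se]) (simp add: Suc.IH)
qed

lemma marginal:
  assumes "1 \<le> t" "t \<le> n"
  shows "map_pmf (\<lambda>h. fst (h ! (t-1))) (hist \<pi> \<nu> n) = action \<pi> \<nu> t"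
  using assms
proof (induction n)
  case 0 then show ?case by simp
next
  case (Suc n)
  show ?case
  proof (cases "t = Suc n")
    case True
    have "map_pmf (\<lambda>h. fst (h ! (t-1))) (hist \<pi> \<nu> (Suc n)) =
       bind_pmf (hist \<pi> \<nu> n) (\<lambda>h. bind_pmf (\<pi> h) (\<lambda>a. map_pmf (\<lambda>y. a) (\<nu> (Suc n) a)))"
      unfolding True
      by (auto simp: map_bind_pmf map_pmf_comp hist_length nth_append intro!: bind_pmf_cong)
    also have "\<dots> = action \<pi> \<nu> t" unfolding action_def True
      by (simp add: map_pmf_const bind_return_pmf')
    finally show ?thesis .
  next
    case False
    hence tn: "t \<le> n" using Suc by simp
    have tl: "t - Suc 0 < n" using tn Suc.prems by simp
    have "map_pmf (\<lambda>h. fst (h ! (t-1))) (hist \<pi> \<nu> (Suc n)) =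
       bind_pmf (hist \<pi> \<nu> n) (\<lambda>h. return_pmf (fst (h ! (t-1))))"
      using tl
      by (auto simp: map_bind_pmf map_pmf_comp hist_length nth_append map_pmf_const bind_pmf_const intro!: bind_pmf_cong)
    also have "\<dots> = action \<pi> \<nu> t" using Suc.IH[OF Suc.prems(1) tn]
      by (simp add: map_pmf_def)
    finally show ?thesis .
  qed
qed




lemma DV:
  fixes g :: "'a \<Rightarrow> real"
  assumes fP: "finite (set_pmf P)" and fQ: "finite (set_pmf Q)" and sub: "set_pmf P \<subseteq> set_pmf Q"
  shows "measure_pmf.expectation P g \<le> KL0 P Q + ln (measure_pmf.expectation Q (\<lambda>x. exp (g x)))"
proof -
  define Z where "Z = measure_pmf.expectation Q (\<lambda>x. exp (g x))"
  have Zs: "Z = (\<Sum>x\<in>set_pmf Q. exp (g x) * pmf Q x)"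
    unfolding Z_def by (rule integral_measure_pmf_real) (use fQ in auto)
  have ne: "set_pmf Q \<noteq> {}" by (simp add: set_pmf_not_empty)
  have Zpos: "Z > 0" unfolding Zs
    by (intro sum_pos fQ ne) (auto simp: pmf_positive)
  have Zge: "(\<Sum>x\<in>set_pmf P. exp (g x) * pmf Q x) \<le> Z" unfolding Zs
    by (intro sum_mono2 fQ sub) auto
  have eP: "measure_pmf.expectation P g = (\<Sum>x\<in>set_pmf P. g x * pmf P x)"
    by (rule integral_measure_pmf_real) (use fP in auto)
  have eK: "KL0 P Q = (\<Sum>x\<in>set_pmf P. ln (pmf P x / pmf Q x) * pmf P x)"
    unfolding KL0_def by (rule integral_measure_pmf_real) (use fP in auto)
  have sum1: "(\<Sum>x\<in>set_pmf P. pmf P x) = 1"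
    using sum_pmf_eq_1[OF fP] by simp
  have "measure_pmf.expectation P g - KL0 P Q - ln Z =
      (\<Sum>x\<in>set_pmf P. pmf P x * ln (pmf Q x * exp (g x) / (pmf P x * Z)))"
  proof -
    have "(\<Sum>x\<in>set_pmf P. pmf P x * ln (pmf Q x * exp (g x) / (pmf P x * Z))) =
          (\<Sum>x\<in>set_pmf P. g x * pmf P x - ln (pmf P x / pmf Q x) * pmf P x - pmf P x * ln Z)"
    proof (intro sum.cong refl)
      fix x assume x: "x \<in> set_pmf P"
      have "pmf P x > 0" "pmf Q x > 0" using x sub by (auto simp: pmf_positive)
      thus "pmf P x * ln (pmf Q x * exp (g x) / (pmf P x * Z)) =
            g x * pmf P x - ln (pmf P x / pmf Q x) * pmf P x - pmf P x * ln Z"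
        using Zpos by (simp add: ln_mult ln_div algebra_simps)
    qed
    also have "\<dots> = measure_pmf.expectation P g - KL0 P Q - ln Z"
      by (simp add: eP eK sum_subtractf sum_distrib_right[symmetric] sum1)
    finally show ?thesis by simp
  qed
  also have "\<dots> \<le> (\<Sum>x\<in>set_pmf P. pmf P x * (pmf Q x * exp (g x) / (pmf P x * Z) - 1))"
  proof (intro sum_mono mult_left_mono)
    fix x assume x: "x \<in> set_pmf P"
    have "pmf P x > 0" "pmf Q x > 0" using x sub by (auto simp: pmf_positive)
    thus "ln (pmf Q x * exp (g x) / (pmf P x * Z)) \<le> pmf Q x * exp (g x) / (pmf P x * Z) - 1"
      using Zpos by (intro ln_le_minus_one) auto
  qed auto
  also have "\<dots> = (\<Sum>x\<in>set_pmf P. exp (g x) * pmf Q x) / Z - 1"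
  proof -
    have "(\<Sum>x\<in>set_pmf P. pmf P x * (pmf Q x * exp (g x) / (pmf P x * Z) - 1)) =
          (\<Sum>x\<in>set_pmf P. exp (g x) * pmf Q x / Z - pmf P x)"
    proof (intro sum.cong refl)
      fix x assume x: "x \<in> set_pmf P"
      have "pmf P x > 0" using x by (auto simp: pmf_positive)
      thus "pmf P x * (pmf Q x * exp (g x) / (pmf P x * Z) - 1) = exp (g x) * pmf Q x / Z - pmf P x"
        using Zpos by (simp add: field_simps)
    qed
    thus ?thesis by (simp add: sum_subtractf sum_divide_distrib[symmetric] sum1)
  qed
  also have "\<dots> \<le> 0" using Zge Zpos by (simp add: divide_le_eq)
  finally show ?thesis unfolding Z_def by simp
qed




lemma hoeffding_pmf:
  fixes f :: "'a \<Rightarrow> real"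
  assumes fQ: "finite (set_pmf Q)" and rng: "\<And>x. x \<in> set_pmf Q \<Longrightarrow> f x \<in> {a..b}" and l: "l > 0"
  shows "measure_pmf.expectation Q (\<lambda>x. exp (l * (f x - measure_pmf.expectation Q f)))
          \<le> exp (l\<^sup>2 * (b - a)\<^sup>2 / 8)"
proof -
  interpret interval_bounded_random_variable "measure_pmf Q" f a b
  proof
    show "f \<in> borel_measurable (measure_pmf Q)" by simp
    show "AE x in measure_pmf Q. f x \<in> {a..b}" using rng by (simp add: AE_measure_pmf_iff)
  qed
  have i: "integrable (measure_pmf Q) (\<lambda>x. exp (l * (f x - measure_pmf.expectation Q f)))"
    by (rule integrable_measure_pmf_finite[OF fQ])
  have "ennreal (measure_pmf.expectation Q (\<lambda>x. exp (l * (f x - measure_pmf.expectation Q f))))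
     = (\<integral>\<^sup>+x. ennreal (exp (l * (f x - measure_pmf.expectation Q f))) \<partial>measure_pmf Q)"
    by (rule nn_integral_eq_integral[symmetric, OF i]) simp
  also have "\<dots> \<le> ennreal (exp (l\<^sup>2 * (b - a)\<^sup>2 / 8))"
    by (rule Hoeffdings_lemma_nn_integral[OF l])
  finally show ?thesis by (subst (asm) ennreal_le_iff) auto
qed




definition bern :: "real \<Rightarrow> real pmf" where
  "bern p = map_pmf (\<lambda>b. if b then 1 else 0) (bernoulli_pmf p)"

lemma set_bern_sub: "set_pmf (bern p) \<subseteq> {0, 1}"
  unfolding bern_def by auto

lemma set_bern: "0 < p \<Longrightarrow> p < 1 \<Longrightarrow> set_pmf (bern p) = {0, 1}"
  unfolding bern_def by (auto simp: set_pmf_bernoulli)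

lemma mean_bern: "0 \<le> p \<Longrightarrow> p \<le> 1 \<Longrightarrow> measure_pmf.expectation (bern p) (\<lambda>y. y) = p"
  unfolding bern_def by simp

lemma KL0_bern:
  assumes "0 < p" "p < 1" "0 < q" "q < 1"
  shows "KL0 (bern p) (bern q) = p * ln (p / q) + (1 - p) * ln ((1 - p) / (1 - q))"
proof -
  have inj: "inj (\<lambda>b. if b then 1 else (0::real))" by (auto simp: inj_on_def split: if_splits)
  have "KL0 (bern p) (bern q) = KL0 (bernoulli_pmf p) (bernoulli_pmf q)"
    unfolding bern_def by (rule KL0_map_inj[OF inj]) (use assms in \<open>auto simp: set_pmf_bernoulli\<close>)
  also have "\<dots> = p * ln (p / q) + (1 - p) * ln ((1 - p) / (1 - q))"
    unfolding KL0_def using assms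
    by (subst integral_measure_pmf_real[of UNIV]) (auto simp: UNIV_bool)
  finally show ?thesis .
qed

lemma neg_ln_chord:
  fixes x :: real assumes "0 \<le> x" "x \<le> 1/4"
  shows "- ln (1 - x) \<le> 4 * ln (4/3) * x"
proof -
  have cvx: "convex_on {..<1} (\<lambda>x::real. - ln (1 - x))"
  proof (rule convex_on_realI[where f' = "\<lambda>x. 1 / (1 - x)"])
    show "connected {..<(1::real)}" by simp
    show "((\<lambda>x. - ln (1 - x)) has_real_derivative 1 / (1 - x)) (at x)" if "x \<in> {..<1}" for x :: real
      using that by (auto intro!: derivative_eq_intros simp: field_simps)
    show "1 / (1 - x) \<le> 1 / (1 - y)" if "x \<in> {..<1}" "y \<in> {..<1}" "x \<le> y" for x y :: real
      using that by (intro divide_left_mono) auto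
  qed
  have "- ln (1 - ((1 - 4*x) *\<^sub>R 0 + (4*x) *\<^sub>R (1/4))) \<le> (1 - 4*x) * (- ln (1 - 0)) + (4*x) * (- ln (1 - 1/4))"
    by (rule convex_onD[OF cvx]) (use assms in auto)
  moreover have e: "ln (3/4 :: real) = - ln (4/3)"
    by (simp add: ln_div)
  ultimately have "4 * x * (- ln (4/3)) \<le> ln (1 - x)" by simp
  thus ?thesis by (simp add: mult_ac)
qed

lemma KL0_bern_half:
  assumes "0 \<le> e" "e \<le> 1/4"
  shows "KL0 (bern (1/2)) (bern (1/2 + e)) \<le> 8 * ln (4/3) * e\<^sup>2"
proof -
  have "KL0 (bern (1/2)) (bern (1/2 + e)) = 1/2 * ln ((1/2) / (1/2 + e)) + 1/2 * ln ((1/2) / (1/2 - e))"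
    using assms by (subst KL0_bern) (auto simp: algebra_simps)
  also have "\<dots> = - ln (1 - 4 * e\<^sup>2) / 2"
  proof -
    have "ln ((1/2) / (1/2 + e)) + ln ((1/2) / (1/2 - e)) = ln (((1/2) / (1/2 + e)) * ((1/2) / (1/2 - e)))"
      using assms by (subst ln_mult) auto
    also have "((1/2) / (1/2 + e)) * ((1/2) / (1/2 - e)) = 1 / (1 - 4 * e\<^sup>2)"
      using assms by (simp add: field_simps power2_eq_square)
    also have "ln (1 / (1 - 4 * e\<^sup>2)) = - ln (1 - 4 * e\<^sup>2)"
      using assms by (subst ln_div) (auto simp: power2_eq_square intro: mult_mono)
    finally show ?thesis by (simp add: algebra_simps)
  qed
  also have "\<dots> \<le> 4 * ln (4/3) * (4 * e\<^sup>2) / 2"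
  proof -
    have "e\<^sup>2 \<le> (1/4)\<^sup>2" using assms by (intro power_mono) auto
    hence "- ln (1 - 4 * e\<^sup>2) \<le> 4 * ln (4/3) * (4 * e\<^sup>2)" using neg_ln_chord[of "4 * e\<^sup>2"] by (simp add: power2_eq_square)
    thus ?thesis by linarith
  qed
  finally show ?thesis by (simp add: mult_ac)
qed




lemma exp_ind_action:
  assumes "1 \<le> t" "t \<le> n"
  shows "measure_pmf.expectation (hist \<pi> \<nu> n) (\<lambda>h. indicator {k} (fst (h ! (t-1))) :: real)
         = pmf (action \<pi> \<nu> t) k"
proof -
  have "measure_pmf.expectation (hist \<pi> \<nu> n) (\<lambda>h. indicator {k} (fst (h ! (t-1))) :: real)
     = measure_pmf.expectation (map_pmf (\<lambda>h. fst (h ! (t-1))) (hist \<pi> \<nu> n)) (indicator {k})"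
    by (subst integral_map_pmf) (rule refl)
  also have "\<dots> = pmf (action \<pi> \<nu> t) k"
    by (subst marginal[OF assms]) (simp add: measure_pmf_single)
  finally show ?thesis .
qed

lemma ln_le_of_le_exp:
  fixes x y :: real assumes "0 \<le> x" "x \<le> exp y" "0 \<le> y" shows "ln x \<le> y"
proof (cases "x = 0")
  case True then show ?thesis using assms by simp
next
  case False
  hence "ln x \<le> ln (exp y)" using assms by (subst ln_le_cancel_iff) auto
  thus ?thesis by simp
qed

lemma block_bound:
  fixes \<pi> :: policy and \<nu>0 \<nu>1 :: env and e :: real and B :: "nat set"
  assumes fp: "\<And>h. finite (set_pmf (\<pi> h))"
    and fe: "\<And>t a. finite (set_pmf (\<nu>0 t a))"
    and se: "\<And>t a. set_pmf (\<nu>0 t a) = set_pmf (\<nu>1 t a)"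
    and same: "\<And>t a. t \<in> {1..T} \<Longrightarrow> \<not> (t \<in> B \<and> a = k) \<Longrightarrow> \<nu>1 t a = \<nu>0 t a"
    and inB0: "\<And>t. t \<in> B \<Longrightarrow> \<nu>0 t k = bern (1/2)"
    and inB1: "\<And>t. t \<in> B \<Longrightarrow> \<nu>1 t k = bern (1/2 + e)"
    and BT: "B \<subseteq> {1..T}" and e: "0 < e" "e \<le> 1/4" and K: "real K \<ge> 2"
    and small: "16 * e\<^sup>2 * real (card B) \<le> real K"
    and low: "(\<Sum>t\<in>B. pmf (action \<pi> \<nu>0 t) k) \<le> real (card B) / real K"
  shows "(\<Sum>t\<in>B. pmf (action \<pi> \<nu>1 t) k) \<le> real (card B) * (1 + sqrt (ln (4/3))) / 2"
proof (cases "B = {}")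
  case True then show ?thesis by simp
next
  case False
  have finB: "finite B" using BT finite_subset by blast
  define L where "L = real (card B)"
  have Lpos: "L > 0" using False finB by (simp add: L_def card_gt_0_iff)
  define n :: "history \<Rightarrow> real" where "n h = (\<Sum>t\<in>B. indicator {k} (fst (h ! (t-1))))" for h
  define P0 where "P0 = hist \<pi> \<nu>0 T"
  define P1 where "P1 = hist \<pi> \<nu>1 T"
  have fe1: "finite (set_pmf (\<nu>1 t a))" for t a using fe[of t a] se[of t a] by simp
  have fP0: "finite (set_pmf P0)" unfolding P0_def by (rule hist_finite[OF fp fe])
  have fP1: "finite (set_pmf P1)" unfolding P1_def by (rule hist_finite[OF fp fe1])
  have sP: "set_pmf P0 \<subseteq> set_pmf P1" unfolding P0_def P1_def using hist_set_eq[OF se] by auto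
  have En: "measure_pmf.expectation (hist \<pi> \<nu> T) n = (\<Sum>t\<in>B. pmf (action \<pi> \<nu> t) k)"
    if "finite (set_pmf (hist \<pi> \<nu> T))" for \<nu>
    unfolding n_def
    apply (subst Bochner_Integration.integral_sum)
     apply (rule integrable_measure_pmf_finite[OF that])
    apply (intro sum.cong refl exp_ind_action)
    using BT by auto
  define klv where "klv = KL0 (bern (1/2)) (bern (1/2 + e))"
  define E0 where "E0 = (\<Sum>t\<in>B. pmf (action \<pi> \<nu>0 t) k)"
  define E1 where "E1 = (\<Sum>t\<in>B. pmf (action \<pi> \<nu>1 t) k)"
  have klv: "klv \<le> 8 * ln (4/3) * e\<^sup>2" unfolding klv_def by (rule KL0_bern_half) (use e in auto)
  have E0nn: "E0 \<ge> 0" unfolding E0_def by (simp add: sum_nonneg)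
  have KLeq: "KL0 P0 P1 = klv * E0"
  proof -
    have "KL0 P0 P1 = (\<Sum>t=1..T. measure_pmf.expectation (action \<pi> \<nu>0 t) (\<lambda>a. KL0 (\<nu>0 t a) (\<nu>1 t a)))"
      unfolding P0_def P1_def by (rule KL0_hist[OF fp fe se])
    also have "\<dots> = (\<Sum>t=1..T. if t \<in> B then klv * pmf (action \<pi> \<nu>0 t) k else 0)"
    proof (intro sum.cong refl)
      fix t assume t: "t \<in> {1..T}"
      show "measure_pmf.expectation (action \<pi> \<nu>0 t) (\<lambda>a. KL0 (\<nu>0 t a) (\<nu>1 t a)) =
            (if t \<in> B then klv * pmf (action \<pi> \<nu>0 t) k else 0)"
      proof (cases "t \<in> B")
        case True
        have "(\<lambda>a. KL0 (\<nu>0 t a) (\<nu>1 t a)) = (\<lambda>a. indicator {k} a * klv)"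
        proof
          fix a show "KL0 (\<nu>0 t a) (\<nu>1 t a) = indicator {k} a * klv"
            using same[OF t, of a] inB0[OF True] inB1[OF True] by (cases "a = k") (auto simp: klv_def KL0_self)
        qed
        thus ?thesis using True by (simp add: measure_pmf_single mult_ac)
      next
        case False
        have "(\<lambda>a. KL0 (\<nu>0 t a) (\<nu>1 t a)) = (\<lambda>a. 0)"
          using same[OF t] False by (auto simp: KL0_self)
        thus ?thesis using False by simp
      qed
    qed
    also have "\<dots> = klv * E0"
      unfolding E0_def sum_distrib_left
      by (subst sum.inter_restrict[symmetric]) (use BT in \<open>auto intro!: sum.cong simp: Int_absorb1\<close>)
    finally show ?thesis .
  qed
  have KLb: "KL0 P0 P1 \<le> 8 * ln (4/3) * e\<^sup>2 * (L / real K)"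
  proof -
    have "klv \<ge> 0 \<or> klv < 0" by auto
    have "KL0 P0 P1 \<le> 8 * ln (4/3) * e\<^sup>2 * E0" unfolding KLeq
      by (rule mult_right_mono[OF klv E0nn])
    also have "\<dots> \<le> 8 * ln (4/3) * e\<^sup>2 * (L / real K)"
      by (rule mult_left_mono) (use low in \<open>auto simp: E0_def L_def\<close>)
    finally show ?thesis .
  qed
  have key: "l * (E1 - E0) \<le> KL0 P0 P1 + l\<^sup>2 * L\<^sup>2 / 8" if l: "l > 0" for l
  proof -
    define g where "g h = l * (E1 - n h)" for h
    have EP1: "measure_pmf.expectation P1 n = E1" unfolding P1_def E1_def by (rule En) (use fP1 P1_def in simp)
    have EP0: "measure_pmf.expectation P0 n = E0" unfolding P0_def E0_def by (rule En) (use fP0 P0_def in simp)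
    have "measure_pmf.expectation P0 g = measure_pmf.expectation P0 (\<lambda>h. l*E1 - l * n h)"
      unfolding g_def by (simp add: right_diff_distrib)
    also have "\<dots> = l*E1 - l * E0"
      using EP0 by (simp add: Bochner_Integration.integral_diff integrable_measure_pmf_finite[OF fP0])
    finally have "measure_pmf.expectation P0 g = l * (E1 - E0)" by (simp add: algebra_simps)
    moreover have "measure_pmf.expectation P0 g \<le> KL0 P0 P1 + ln (measure_pmf.expectation P1 (\<lambda>x. exp (g x)))"
      by (rule DV[OF fP0 fP1 sP])
    moreover have "ln (measure_pmf.expectation P1 (\<lambda>x. exp (g x))) \<le> l\<^sup>2 * L\<^sup>2 / 8"
    proof -
      have rng: "- n h \<in> {- L..0}" for h
      proof -
        have "n h \<le> (\<Sum>t\<in>B. 1)" unfolding n_def by (intro sum_mono) (auto simp: indicator_def)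
        moreover have "n h \<ge> 0" unfolding n_def by (intro sum_nonneg) auto
        ultimately show ?thesis by (auto simp: L_def)
      qed
      have Em: "measure_pmf.expectation P1 (\<lambda>h. - n h) = - E1" using EP1 by simp
      have H: "measure_pmf.expectation P1 (\<lambda>x. exp (l * ((- n x) - measure_pmf.expectation P1 (\<lambda>h. - n h))))
         \<le> exp (l\<^sup>2 * (0 - - L)\<^sup>2 / 8)"
        by (rule hoeffding_pmf[OF fP1 _ l]) (use rng in auto)
      have gg: "(\<lambda>x. exp (g x)) = (\<lambda>x. exp (l * ((- n x) - measure_pmf.expectation P1 (\<lambda>h. - n h))))"
        unfolding Em g_def by (simp add: algebra_simps)
      have "measure_pmf.expectation P1 (\<lambda>x. exp (g x)) \<le> exp (l\<^sup>2 * (0 - - L)\<^sup>2 / 8)"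
        unfolding gg by (rule H)
      moreover have "measure_pmf.expectation P1 (\<lambda>x. exp (g x)) \<ge> 0" by (simp add: integral_nonneg)
      ultimately show ?thesis
        by (intro ln_le_of_le_exp) (auto simp: power_mult_distrib mult_ac)
    qed
    ultimately show ?thesis by linarith
  qed
  define Q where "Q = 8 * ln (4/3) * e\<^sup>2 * (L / real K)"
  have ln43: "ln (4/3::real) > 0" by simp
  have Qpos: "Q > 0" unfolding Q_def using e Lpos K ln43 by (intro mult_pos_pos divide_pos_pos) auto
  define r where "r = sqrt (Q / 2)"
  have rpos: "r > 0" unfolding r_def using Qpos by simp
  have r2: "r\<^sup>2 = Q / 2" unfolding r_def using Qpos by simp
  have "(4 * r / L) * (E1 - E0) \<le> Q + (4 * r / L)\<^sup>2 * L\<^sup>2 / 8"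
    using key[of "4 * r / L"] KLb rpos Lpos unfolding Q_def by simp
  also have "\<dots> = 4 * r\<^sup>2" using Lpos r2 by (simp add: field_simps power2_eq_square)
  finally have "(4 * r / L) * (E1 - E0) \<le> (4 * r / L) * (r * L)" using Lpos rpos
    by (simp add: power2_eq_square field_simps)
  hence d: "E1 - E0 \<le> r * L" using Lpos rpos by (subst (asm) mult_le_cancel_left_pos) auto
  have "Q / 2 \<le> ln (4/3) / 4"
  proof -
    have "Q / 2 = ln (4/3) * (16 * e\<^sup>2 * L) / (4 * real K)" unfolding Q_def by (simp add: field_simps)
    also have "\<dots> \<le> ln (4/3) * real K / (4 * real K)"
      using small ln43 K unfolding L_def by (intro divide_right_mono mult_left_mono) auto
    also have "\<dots> = ln (4/3) / 4" using K by simp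
    finally show ?thesis .
  qed
  hence "r \<le> sqrt (ln (4/3) / 4)" unfolding r_def by (rule real_sqrt_le_mono)
  also have "sqrt (ln (4/3) / 4) = sqrt (ln (4/3)) / 2" by (simp add: real_sqrt_divide)
  finally have rs: "r \<le> sqrt (ln (4/3)) / 2" .
  have "E0 \<le> L / 2" using low K Lpos unfolding E0_def L_def
    by (smt (verit, del_insts) divide_left_mono mult_pos_pos of_nat_0_le_iff zero_less_divide_iff)
  moreover have "r * L \<le> sqrt (ln (4/3)) / 2 * L" using rs Lpos by (intro mult_right_mono) auto
  ultimately have "E1 \<le> L / 2 + sqrt (ln (4/3)) / 2 * L" using d by linarith
  thus ?thesis unfolding E1_def L_def by (simp add: field_simps)
qed



definition muG :: "(nat \<Rightarrow> nat) \<Rightarrow> (nat \<Rightarrow> real) \<Rightarrow> (nat \<Rightarrow> nat) \<Rightarrow> nat \<Rightarrow> nat \<Rightarrow> real" where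
  "muG blk eps g t a = 1/2 + (if 0 < a \<and> a = g (blk t) then eps (blk t) else 0)"

definition envG :: "(nat \<Rightarrow> nat) \<Rightarrow> (nat \<Rightarrow> real) \<Rightarrow> (nat \<Rightarrow> nat) \<Rightarrow> env" where
  "envG blk eps g t a = bern (muG blk eps g t a)"

definition blockset :: "nat \<Rightarrow> (nat \<Rightarrow> nat) \<Rightarrow> nat \<Rightarrow> nat set" where
  "blockset T blk m = {t \<in> {1..T}. blk t = m}"

definition pickk :: "nat \<Rightarrow> nat \<Rightarrow> policy \<Rightarrow> (nat \<Rightarrow> nat) \<Rightarrow> (nat \<Rightarrow> real) \<Rightarrow> (nat \<Rightarrow> nat) \<Rightarrow> nat \<Rightarrow> nat" where
  "pickk K T \<pi> blk eps g m = (SOME k. k \<in> {1..K} \<and>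
     (\<Sum>t\<in>blockset T blk m. pmf (action \<pi> (envG blk eps g) t) k) \<le> real (card (blockset T blk m)) / real K)"

fun sel :: "nat \<Rightarrow> nat \<Rightarrow> policy \<Rightarrow> (nat \<Rightarrow> nat) \<Rightarrow> (nat \<Rightarrow> real) \<Rightarrow> nat \<Rightarrow> (nat \<Rightarrow> nat)" where
  "sel K T \<pi> blk eps 0 = (\<lambda>_. 0)"
| "sel K T \<pi> blk eps (Suc m) = (sel K T \<pi> blk eps m)(m := pickk K T \<pi> blk eps (sel K T \<pi> blk eps m) m)"

lemma sel_high: "m \<le> l \<Longrightarrow> sel K T \<pi> blk eps m l = 0"
  by (induction m) auto

lemma sel_stable: "l < m \<Longrightarrow> m \<le> m' \<Longrightarrow> sel K T \<pi> blk eps m' l = sel K T \<pi> blk eps m l"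
  by (induction m' rule: nat.induct) (auto simp: le_Suc_eq)

lemma pickk_prop:
  assumes "K \<ge> 1"
  shows "pickk K T \<pi> blk eps g m \<in> {1..K} \<and>
     (\<Sum>t\<in>blockset T blk m. pmf (action \<pi> (envG blk eps g) t) (pickk K T \<pi> blk eps g m))
        \<le> real (card (blockset T blk m)) / real K"
proof -
  let ?B = "blockset T blk m"
  let ?f = "\<lambda>k. (\<Sum>t\<in>?B. pmf (action \<pi> (envG blk eps g) t) k)"
  have "\<exists>k. k \<in> {1..K} \<and> ?f k \<le> real (card ?B) / real K"
  proof (rule ccontr)
    assume "\<not> ?thesis"
    hence gt: "\<And>k. k \<in> {1..K} \<Longrightarrow> ?f k > real (card ?B) / real K" by force
    have "(\<Sum>k\<in>{1..K}. real (card ?B) / real K) < (\<Sum>k\<in>{1..K}. ?f k)"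
      using assms by (intro sum_strict_mono gt) auto
    also have "\<dots> = (\<Sum>t\<in>?B. \<Sum>k\<in>{1..K}. pmf (action \<pi> (envG blk eps g) t) k)"
      by (rule sum.swap)
    also have "\<dots> \<le> (\<Sum>t\<in>?B. 1)"
    proof (intro sum_mono)
      fix t
      have "(\<Sum>k\<in>{1..K}. pmf (action \<pi> (envG blk eps g) t) k) = measure_pmf.prob (action \<pi> (envG blk eps g) t) {1..K}"
        by (simp add: measure_measure_pmf_finite)
      also have "\<dots> \<le> 1" by simp
      finally show "(\<Sum>k\<in>{1..K}. pmf (action \<pi> (envG blk eps g) t) k) \<le> 1" .
    qed
    finally show False using assms by simp
  qed
  thus ?thesis unfolding pickk_def by (rule someI_ex)
qed

lemma exp_muG:
  assumes "0 < k"
  shows "measure_pmf.expectation p (\<lambda>a. 1/2 + (if 0 < a \<and> a = k then e else 0)) = 1/2 + e * pmf p k"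
proof -
  have "(\<lambda>a. 1/2 + (if 0 < a \<and> a = k then e else 0)) = (\<lambda>a. 1/2 + e * indicator {k} a)"
    using assms by (auto simp: indicator_def)
  moreover have "measure_pmf.expectation p (\<lambda>a. 1/2 + e * indicator {k} a) = 1/2 + e * pmf p k"
  proof -
    have "integrable (measure_pmf p) (indicator {k} :: _ \<Rightarrow> real)"
      by (rule integrable_real_indicator) (auto simp: measure_pmf.emeasure_finite less_top[symmetric])
    thus ?thesis by (subst Bochner_Integration.integral_add) (auto simp: measure_pmf_single)
  qed
  ultimately show ?thesis by simp
qed




lemma set_envG: "set_pmf (envG blk eps g t a) = {0, 1}" if "\<And>m. 0 < eps m" "\<And>m. eps m \<le> 1/4"
  unfolding envG_def muG_def using that[of "blk t"] by (intro set_bern) auto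

lemma block_step:
  fixes K T :: nat and \<pi> :: policy and blk :: "nat \<Rightarrow> nat" and eps :: "nat \<Rightarrow> real"
  assumes K: "K \<ge> 2" and pol: "is_policy K \<pi>"
    and mono: "\<And>t t'. 1 \<le> t \<Longrightarrow> t \<le> t' \<Longrightarrow> t' \<le> T \<Longrightarrow> blk t \<le> blk t'"
    and epos: "\<And>m. 0 < eps m" and ele: "\<And>m. eps m \<le> 1/4"
    and small: "\<And>m. 16 * (eps m)\<^sup>2 * real (card (blockset T blk m)) \<le> real K"
    and m: "m \<le> M"
  shows "(\<Sum>t\<in>blockset T blk m. pmf (action \<pi> (envG blk eps (sel K T \<pi> blk eps (Suc M))) t)
            (sel K T \<pi> blk eps (Suc M) m))
         \<le> real (card (blockset T blk m)) * (1 + sqrt (ln (4/3))) / 2"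
proof -
  let ?B = "blockset T blk m"
  define g0 where "g0 = sel K T \<pi> blk eps m"
  define k where "k = pickk K T \<pi> blk eps g0 m"
  define g1 where "g1 = g0(m := k)"
  have g1s: "g1 = sel K T \<pi> blk eps (Suc m)" unfolding g1_def k_def g0_def by simp
  have g0m: "g0 m = 0" unfolding g0_def by (rule sel_high) simp
  have kp: "k \<in> {1..K} \<and> (\<Sum>t\<in>?B. pmf (action \<pi> (envG blk eps g0) t) k) \<le> real (card ?B) / real K"
    unfolding k_def by (rule pickk_prop) (use K in auto)
  have fp: "finite (set_pmf (\<pi> h))" for h
    using pol unfolding is_policy_def by (meson finite_atLeastAtMost finite_subset)
  have bb: "(\<Sum>t\<in>?B. pmf (action \<pi> (envG blk eps g1) t) k) \<le> real (card ?B) * (1 + sqrt (ln (4/3))) / 2"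
  proof (rule block_bound[where T = T and K = K and e = "eps m"])
    show "finite (set_pmf (\<pi> h))" for h by (rule fp)
    show "finite (set_pmf (envG blk eps g0 t a))" for t a by (subst set_envG, (use epos ele in auto)[2])+ simp
    show "set_pmf (envG blk eps g0 t a) = set_pmf (envG blk eps g1 t a)" for t a by (subst set_envG, (use epos ele in auto)[2])+ simp
    show "envG blk eps g1 t a = envG blk eps g0 t a" if "t \<in> {1..T}" "\<not> (t \<in> ?B \<and> a = k)" for t a
      using that g0m unfolding envG_def muG_def g1_def blockset_def by auto
    show "envG blk eps g0 t k = bern (1/2)" if "t \<in> ?B" for t
      using that g0m kp unfolding envG_def muG_def blockset_def by auto
    show "envG blk eps g1 t k = bern (1/2 + eps m)" if "t \<in> ?B" for t
      using that kp unfolding envG_def muG_def blockset_def g1_def by auto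
    show "?B \<subseteq> {1..T}" unfolding blockset_def by auto
    show "0 < eps m" "eps m \<le> 1/4" by (rule epos, rule ele)
    show "2 \<le> real K" using K by simp
    show "16 * (eps m)\<^sup>2 * real (card ?B) \<le> real K" by (rule small)
    show "(\<Sum>t\<in>?B. pmf (action \<pi> (envG blk eps g0) t) k) \<le> real (card ?B) / real K" using kp by blast
  qed
  define g where "g = sel K T \<pi> blk eps (Suc M)"
  have "g m = g1 m" unfolding g_def g1s using m by (intro sel_stable) auto
  hence gm: "g m = k" unfolding g1_def by simp
  have act: "action \<pi> (envG blk eps g) t = action \<pi> (envG blk eps g1) t" if t: "t \<in> ?B" for t
  proof (rule action_agree)
    fix t' assume t': "t' \<in> {1..<t}"
    have "blk t' \<le> blk t" using t t' unfolding blockset_def by (intro mono) auto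
    hence "blk t' < Suc m" using t unfolding blockset_def by auto
    hence "g (blk t') = g1 (blk t')" unfolding g_def g1s using m by (intro sel_stable) auto
    thus "envG blk eps g t' = envG blk eps g1 t'" unfolding envG_def muG_def by (auto simp: fun_eq_iff)
  qed
  show ?thesis using bb unfolding g_def[symmetric] gm by (simp add: act)
qed




lemma aux3: fixes e S C s :: real shows "e*S \<le> e*(C*(1+s)/2) \<Longrightarrow> e*((1-s)/2)*C \<le> e*C - e*S"
proof -
  assume h: "e*S \<le> e*(C*(1+s)/2)"
  have "e*C - e*S - e*((1-s)/2)*C = e*(C*(1+s)/2) - e*S" by (simp add: field_simps)
  thus ?thesis using h by linarith
qed

lemma construct:
  fixes K T :: nat and \<pi> :: policy and blk :: "nat \<Rightarrow> nat" and eps :: "nat \<Rightarrow> real"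
  assumes K: "K \<ge> 2" and pol: "is_policy K \<pi>"
    and mono: "\<And>t t'. 1 \<le> t \<Longrightarrow> t \<le> t' \<Longrightarrow> t' \<le> T \<Longrightarrow> blk t \<le> blk t'"
    and epos: "\<And>m. 0 < eps m" and ele: "\<And>m. eps m \<le> 1/4"
    and small: "\<And>m. 16 * (eps m)\<^sup>2 * real (card (blockset T blk m)) \<le> real K"
  defines "g \<equiv> sel K T \<pi> blk eps (Suc (blk T))"
  shows "(\<forall>t\<in>{1..T}. g (blk t) \<in> {1..K}) \<and>
    (\<Sum>t=1..T. eps (blk t) * ((1 - sqrt (ln (4/3))) / 2)) \<le>
    (\<Sum>t=1..T. muG blk eps g t (g (blk t)) - measure_pmf.expectation (action \<pi> (envG blk eps g) t) (muG blk eps g t))"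
proof -
  let ?s = "sqrt (ln (4/3))"
  have gb: "g (blk t) \<in> {1..K}" if t: "t \<in> {1..T}" for t
  proof -
    have "blk t \<le> blk T" using t by (intro mono) auto
    hence "g (blk t) = sel K T \<pi> blk eps (Suc (blk t)) (blk t)" unfolding g_def by (intro sel_stable) auto
    also have "\<dots> \<in> {1..K}" using pickk_prop[of K T \<pi> blk eps] K by simp
    finally show ?thesis .
  qed
  have trm: "muG blk eps g t (g (blk t)) - measure_pmf.expectation (action \<pi> (envG blk eps g) t) (muG blk eps g t)
      = eps (blk t) - eps (blk t) * pmf (action \<pi> (envG blk eps g) t) (g (blk t))" if t: "t \<in> {1..T}" for t
  proof -
    have p: "0 < g (blk t)" using gb[OF t] by auto
    have "muG blk eps g t = (\<lambda>a. 1/2 + (if 0 < a \<and> a = g (blk t) then eps (blk t) else 0))"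
      unfolding muG_def by auto
    thus ?thesis using p by (simp add: exp_muG)
  qed
  define F where "F t = eps (blk t) - eps (blk t) * pmf (action \<pi> (envG blk eps g) t) (g (blk t))" for t
  define G where "G t = eps (blk t) * ((1 - ?s) / 2)" for t
  have bs: "{x \<in> {1..T}. blk x = m} = blockset T blk m" for m unfolding blockset_def by auto
  have "(\<Sum>t=1..T. G t) = (\<Sum>m\<in>blk ` {1..T}. \<Sum>t\<in>blockset T blk m. G t)"
    by (subst sum.image_gen[of "{1..T}" G blk]) (auto intro!: sum.cong simp: blockset_def)
  also have "\<dots> \<le> (\<Sum>m\<in>blk ` {1..T}. \<Sum>t\<in>blockset T blk m. F t)"
  proof (rule sum_mono)
    fix m assume "m \<in> blk ` {1..T}"
    then obtain t0 where t0: "t0 \<in> {1..T}" "m = blk t0" by auto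
    have mM: "m \<le> blk T" using t0 by (auto intro!: mono)
    let ?B = "blockset T blk m"
    have bsT: "?B \<subseteq> {1..T}" unfolding blockset_def by auto
    have blkB: "t \<in> ?B \<Longrightarrow> blk t = m" for t unfolding blockset_def by auto
    have fB: "finite ?B" unfolding blockset_def by auto
    have stp: "(\<Sum>t\<in>?B. pmf (action \<pi> (envG blk eps g) t) (g m)) \<le> real (card ?B) * (1 + ?s) / 2"
      unfolding g_def by (rule block_step[OF K pol mono epos ele small mM])
    have "(\<Sum>t\<in>?B. G t) = eps m * ((1 - ?s) / 2) * real (card ?B)"
      unfolding G_def by (simp add: blkB)
    also have "\<dots> \<le> eps m * real (card ?B) - eps m * (\<Sum>t\<in>?B. pmf (action \<pi> (envG blk eps g) t) (g m))"
    proof -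
      have "eps m * (\<Sum>t\<in>?B. pmf (action \<pi> (envG blk eps g) t) (g m)) \<le> eps m * (real (card ?B) * (1 + ?s) / 2)"
        using stp epos[of m] by (intro mult_left_mono) auto
      thus ?thesis by (rule aux3)
    qed
    also have "\<dots> = (\<Sum>t\<in>?B. F t)"
      unfolding F_def by (simp add: blkB sum_subtractf sum_distrib_left)
    finally have X: "(\<Sum>t\<in>?B. G t) \<le> (\<Sum>t\<in>?B. F t)" .
    show "sum G (blockset T blk m) \<le> sum F (blockset T blk m)" using X by simp
  qed
  also have "\<dots> = (\<Sum>t=1..T. F t)"
    by (subst sum.image_gen[of "{1..T}" F blk]) (auto intro!: sum.cong simp: blockset_def)
  also have "\<dots> = (\<Sum>t=1..T. muG blk eps g t (g (blk t)) - measure_pmf.expectation (action \<pi> (envG blk eps g) t) (muG blk eps g t))"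
    by (intro sum.cong refl) (simp add: trm F_def)
  finally show ?thesis using gb unfolding G_def by blast
qed




lemma mean_envG:
  assumes "\<And>m. 0 < eps m" "\<And>m. eps m \<le> 1/4"
  shows "mean (envG blk eps g) t a = muG blk eps g t a"
  unfolding mean_def envG_def using assms(1,2)[of "blk t"]
  by (intro mean_bern) (auto simp: muG_def)

lemma muG_range:
  assumes "0 < eps (blk t)"
  shows "1/2 \<le> muG blk eps g t a \<and> muG blk eps g t a \<le> 1/2 + eps (blk t)"
  unfolding muG_def using assms by auto

lemma admissible_envG:
  assumes epos: "\<And>m. 0 < eps m" and ele: "\<And>m. eps m \<le> 1/4" and K: "K \<ge> 1"
    and var: "(\<Sum>t=1..<T. if blk t \<noteq> blk (t+1) then eps (blk t) + eps (blk (t+1)) else 0) \<le> V"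
  shows "admissible K T V (envG blk eps g)"
  unfolding admissible_def
proof (intro conjI ballI)
  fix t k show "set_pmf (envG blk eps g t k) \<subseteq> {0..1}"
    unfolding envG_def using set_bern_sub by fastforce
next
  have "(\<Sum>t=1..<T. Max ((\<lambda>k. \<bar>mean (envG blk eps g) t k - mean (envG blk eps g) (t + 1) k\<bar>) ` {1..K}))
     \<le> (\<Sum>t=1..<T. if blk t \<noteq> blk (t+1) then eps (blk t) + eps (blk (t+1)) else 0)"
  proof (rule sum_mono)
    fix t
    show "Max ((\<lambda>k. \<bar>mean (envG blk eps g) t k - mean (envG blk eps g) (t + 1) k\<bar>) ` {1..K})
      \<le> (if blk t \<noteq> blk (t+1) then eps (blk t) + eps (blk (t+1)) else 0)"
    proof (subst Max_le_iff, simp, use K in simp, intro ballI)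
      fix x assume "x \<in> (\<lambda>k. \<bar>mean (envG blk eps g) t k - mean (envG blk eps g) (t + 1) k\<bar>) ` {1..K}"
      then obtain k where x: "x = \<bar>muG blk eps g t k - muG blk eps g (t+1) k\<bar>"
        using mean_envG[OF epos ele] by auto
      show "x \<le> (if blk t \<noteq> blk (t+1) then eps (blk t) + eps (blk (t+1)) else 0)"
      proof (cases "blk t = blk (t+1)")
        case True
        then show ?thesis using x by (simp add: muG_def)
      next
        case False
        then show ?thesis using x muG_range[where eps=eps and blk=blk and g=g and t=t and a=k, OF epos] muG_range[where eps=eps and blk=blk and g=g and t="t+1" and a=k, OF epos] epos[of "blk t"] epos[of "blk (t+1)"]
          by auto
      qed
    qed
  qed
  thus "(\<Sum>t=1..<T. Max ((\<lambda>k. \<bar>mean (envG blk eps g) t k - mean (envG blk eps g) (t + 1) k\<bar>) ` {1..K})) \<le> V"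
    using var by linarith
qed

lemma varcount:
  fixes f :: "nat \<Rightarrow> nat" and c :: real
  assumes mono: "\<And>t t'. 1 \<le> t \<Longrightarrow> t \<le> t' \<Longrightarrow> t' \<le> T \<Longrightarrow> f t \<le> f t'" and c: "c \<ge> 0"
  shows "(\<Sum>t=1..<T. if f t \<noteq> f (t+1) then c else 0) \<le> c * real (f T - f 1)"
  using mono
proof (induction T)
  case 0 then show ?case using c by simp
next
  case (Suc T)
  show ?case
  proof (cases "T = 0")
    case True then show ?thesis using c by simp
  next
    case False
    have IH: "(\<Sum>t=1..<T. if f t \<noteq> f (t+1) then c else 0) \<le> c * real (f T - f 1)"
      by (rule Suc.IH) (use Suc.prems in auto)
    have m1: "f 1 \<le> f T" "f T \<le> f (Suc T)" using Suc.prems False by auto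
    have "(\<Sum>t=1..<Suc T. if f t \<noteq> f (t+1) then c else 0) =
          (\<Sum>t=1..<T. if f t \<noteq> f (t+1) then c else 0) + (if f T \<noteq> f (T+1) then c else 0)"
      using False by simp
    also have "\<dots> \<le> c * real (f T - f 1) + c * real (f (Suc T) - f T)"
    proof (rule add_mono[OF IH])
      show "(if f T \<noteq> f (T+1) then c else 0) \<le> c * real (f (Suc T) - f T)"
      proof (cases "f T = f (T+1)")
        case True then show ?thesis by simp
      next
        case False
        hence "1 \<le> real (f (Suc T) - f T)" using m1 by simp
        hence "c * 1 \<le> c * real (f (Suc T) - f T)" using c by (intro mult_left_mono) auto
        thus ?thesis using False by simp
      qed
    qed
    also have "\<dots> = c * real (f (Suc T) - f 1)" using m1 by (simp add: algebra_simps of_nat_diff)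
    finally show ?thesis .
  qed
qed




lemma win_sum:
  fixes f :: "nat \<Rightarrow> real"
  shows "(\<Sum>j=1..n. \<Sum>t\<in>window W j. f t) = (\<Sum>t=1..(\<Sum>i=1..n. W i). f t)"
proof (induction n)
  case 0 then show ?case by simp
next
  case (Suc n)
  have w: "window W (Suc n) = {(\<Sum>i=1..n. W i) + 1 .. (\<Sum>i=1..n. W i) + W (Suc n)}"
    unfolding window_def by (simp add: atLeastLessThanSuc_atLeastAtMost)
  have "(\<Sum>t=1..(\<Sum>i=1..Suc n. W i). f t) = (\<Sum>t=1..(\<Sum>i=1..n. W i) + W (Suc n). f t)" by simp
  also have "\<dots> = (\<Sum>t=1..(\<Sum>i=1..n. W i). f t) + (\<Sum>t\<in>window W (Suc n). f t)"
    unfolding w by (rule sum.ub_add_nat) simp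
  finally show ?case using Suc by simp
qed

lemma mean_bounds:
  assumes "set_pmf (\<nu> t k) \<subseteq> {0..1}"
  shows "0 \<le> mean \<nu> t k \<and> mean \<nu> t k \<le> 1"
proof
  show "0 \<le> mean \<nu> t k" unfolding mean_def
    by (intro integral_nonneg_AE) (use assms in \<open>auto simp: AE_measure_pmf_iff\<close>)
  have int: "integrable (measure_pmf (\<nu> t k)) (\<lambda>y. y)"
    by (rule measure_pmf.integrable_const_bound[where B=1]) (use assms in \<open>auto simp: AE_measure_pmf_iff\<close>)
  show "mean \<nu> t k \<le> 1" unfolding mean_def
    by (rule measure_pmf.integral_le_const[OF int]) (use assms in \<open>auto simp: AE_measure_pmf_iff\<close>)
qed

lemma window_sub:
  assumes "j \<in> {1..N}" "(\<Sum>j=1..N. W j) = T"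
  shows "window W j \<subseteq> {1..T}"
proof -
  have "(\<Sum>i=1..j. W i) \<le> (\<Sum>i=1..N. W i)" using assms(1) by (intro sum_mono2) auto
  thus ?thesis using assms unfolding window_def by auto
qed

lemma action_set: "is_policy K \<pi> \<Longrightarrow> set_pmf (action \<pi> \<nu> t) \<subseteq> {1..K}"
  unfolding action_def is_policy_def by auto

lemma regret_le_worst:
  assumes pol: "is_policy K \<pi>" and adm: "admissible K T V \<nu>" and K: "K \<ge> 1"
    and sumT: "(\<Sum>j=1..N. W j) = T"
  shows "regret K T N W \<pi> \<nu> \<le> worst_regret K T N W V \<pi>"
  unfolding worst_regret_def
proof (rule cSUP_upper)
  show "\<nu> \<in> {\<nu>. admissible K T V \<nu>}" using adm by simp
  show "bdd_above (regret K T N W \<pi> ` {\<nu>. admissible K T V \<nu>})"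
  proof (rule bdd_aboveI2)
    fix \<nu>' assume "\<nu>' \<in> {\<nu>. admissible K T V \<nu>}"
    hence a: "admissible K T V \<nu>'" by simp
    have mb: "t \<in> {1..T} \<Longrightarrow> k \<in> {1..K} \<Longrightarrow> 0 \<le> mean \<nu>' t k \<and> mean \<nu>' t k \<le> 1" for t k
      using a unfolding admissible_def by (intro mean_bounds) auto
    have "(\<Sum>j=1..N. Max ((\<lambda>k. \<Sum>t\<in>window W j. mean \<nu>' t k) ` {1..K})) \<le> (\<Sum>j=1..N. real (card (window W j)))"
    proof (rule sum_mono)
      fix j assume j: "j \<in> {1..N}"
      show "Max ((\<lambda>k. \<Sum>t\<in>window W j. mean \<nu>' t k) ` {1..K}) \<le> real (card (window W j))"
      proof (subst Max_le_iff, simp, use K in simp, intro ballI)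
        fix x assume "x \<in> (\<lambda>k. \<Sum>t\<in>window W j. mean \<nu>' t k) ` {1..K}"
        then obtain k where k: "k \<in> {1..K}" "x = (\<Sum>t\<in>window W j. mean \<nu>' t k)" by auto
        have "x \<le> (\<Sum>t\<in>window W j. 1)" unfolding k(2)
          by (intro sum_mono) (use mb k(1) window_sub[OF j sumT] in auto)
        thus "x \<le> real (card (window W j))" by simp
      qed
    qed
    moreover have "expected_reward \<pi> \<nu>' T \<ge> 0" unfolding expected_reward_def
    proof (intro sum_nonneg integral_nonneg_AE)
      fix t assume t: "t \<in> {1..T}"
      show "AE a in measure_pmf (action \<pi> \<nu>' t). 0 \<le> mean \<nu>' t a"
        unfolding AE_measure_pmf_iff
      proof
        fix a assume "a \<in> set_pmf (action \<pi> \<nu>' t)"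
        hence "a \<in> {1..K}" using action_set[OF pol] by blast
        thus "0 \<le> mean \<nu>' t a" using mb[OF t] by blast
      qed
    qed
    ultimately show "regret K T N W \<pi> \<nu>' \<le> (\<Sum>j=1..N. real (card (window W j)))"
      unfolding regret_def by linarith
  qed
qed




lemma regret_lower:
  assumes epos: "\<And>m. 0 < eps m" and ele: "\<And>m. eps m \<le> 1/4"
    and Wpos: "\<forall>j\<in>{1..N}. W j > 0" and sumT: "(\<Sum>j=1..N. W j) = T"
    and const: "\<And>j t. j \<in> {1..N} \<Longrightarrow> t \<in> window W j \<Longrightarrow> blk t = blk (\<Sum>i=1..j. W i)"
    and gK: "\<forall>t\<in>{1..T}. g (blk t) \<in> {1..K}"
  shows "(\<Sum>t=1..T. muG blk eps g t (g (blk t)) - measure_pmf.expectation (action \<pi> (envG blk eps g) t) (muG blk eps g t))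
     \<le> regret K T N W \<pi> (envG blk eps g)"
proof -
  let ?\<nu> = "envG blk eps g"
  have me: "mean ?\<nu> t = muG blk eps g t" for t by (rule ext, rule mean_envG[OF epos ele])
  have er: "expected_reward \<pi> ?\<nu> T = (\<Sum>t=1..T. measure_pmf.expectation (action \<pi> ?\<nu> t) (muG blk eps g t))"
    unfolding expected_reward_def by (simp add: me)
  have "(\<Sum>t=1..T. muG blk eps g t (g (blk t))) = (\<Sum>j=1..N. \<Sum>t\<in>window W j. muG blk eps g t (g (blk t)))"
    using win_sum[where n=N and W=W and f="\<lambda>t. muG blk eps g t (g (blk t))"] sumT by simp
  also have "\<dots> \<le> (\<Sum>j=1..N. Max ((\<lambda>k. \<Sum>t\<in>window W j. mean ?\<nu> t k) ` {1..K}))"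
  proof (rule sum_mono)
    fix j assume j: "j \<in> {1..N}"
    define e where "e = (\<Sum>i=1..j. W i)"
    have Wj: "W j > 0" using Wpos j by auto
    have "e \<in> window W j" unfolding window_def e_def using Wj j
      by (cases j) (auto simp: atLeastLessThanSuc_atLeastAtMost)
    hence eT: "e \<in> {1..T}" using window_sub[OF j sumT] by auto
    have kK: "g (blk e) \<in> {1..K}" using gK eT by auto
    have "(\<Sum>t\<in>window W j. muG blk eps g t (g (blk t))) = (\<Sum>t\<in>window W j. mean ?\<nu> t (g (blk e)))"
      by (intro sum.cong refl) (simp add: me const[OF j] e_def)
    also have "\<dots> \<le> Max ((\<lambda>k. \<Sum>t\<in>window W j. mean ?\<nu> t k) ` {1..K})"
      by (rule Max_ge) (use kK in auto)
    finally show "(\<Sum>t\<in>window W j. muG blk eps g t (g (blk t))) \<le> Max ((\<lambda>k. \<Sum>t\<in>window W j. mean ?\<nu> t k) ` {1..K})" .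
  qed
  finally show ?thesis unfolding regret_def er sum_subtractf by linarith
qed

lemma general:
  fixes K T N :: nat and V :: real and W :: "nat \<Rightarrow> nat" and \<pi> :: policy and blk :: "nat \<Rightarrow> nat" and eps :: "nat \<Rightarrow> real"
  assumes K: "K \<ge> 2" and pol: "is_policy K \<pi>"
    and mono: "\<And>t t'. 1 \<le> t \<Longrightarrow> t \<le> t' \<Longrightarrow> t' \<le> T \<Longrightarrow> blk t \<le> blk t'"
    and epos: "\<And>m. 0 < eps m" and ele: "\<And>m. eps m \<le> 1/4"
    and small: "\<And>m. 16 * (eps m)\<^sup>2 * real (card (blockset T blk m)) \<le> real K"
    and Wpos: "\<forall>j\<in>{1..N}. W j > 0" and sumT: "(\<Sum>j=1..N. W j) = T"
    and const: "\<And>j t. j \<in> {1..N} \<Longrightarrow> t \<in> window W j \<Longrightarrow> blk t = blk (\<Sum>i=1..j. W i)"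
    and var: "(\<Sum>t=1..<T. if blk t \<noteq> blk (t+1) then eps (blk t) + eps (blk (t+1)) else 0) \<le> V"
  shows "(\<Sum>t=1..T. eps (blk t) * ((1 - sqrt (ln (4/3))) / 2)) \<le> worst_regret K T N W V \<pi>"
proof -
  define g where "g = sel K T \<pi> blk eps (Suc (blk T))"
  have c: "(\<forall>t\<in>{1..T}. g (blk t) \<in> {1..K}) \<and>
    (\<Sum>t=1..T. eps (blk t) * ((1 - sqrt (ln (4/3))) / 2)) \<le>
    (\<Sum>t=1..T. muG blk eps g t (g (blk t)) - measure_pmf.expectation (action \<pi> (envG blk eps g) t) (muG blk eps g t))"
    unfolding g_def by (rule construct[OF K pol mono epos ele small])
  have adm: "admissible K T V (envG blk eps g)"
    by (rule admissible_envG[OF epos ele _ var]) (use K in simp)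
  have "(\<Sum>t=1..T. muG blk eps g t (g (blk t)) - measure_pmf.expectation (action \<pi> (envG blk eps g) t) (muG blk eps g t))
     \<le> regret K T N W \<pi> (envG blk eps g)"
    by (rule regret_lower[where eps=eps and blk=blk and g=g, OF epos ele Wpos sumT const]) (use c in auto)
  also have "\<dots> \<le> worst_regret K T N W V \<pi>"
    by (rule regret_le_worst[OF pol adm _ sumT]) (use K in simp)
  finally show ?thesis using c by linarith
qed




definition wi :: "nat \<Rightarrow> (nat \<Rightarrow> nat) \<Rightarrow> nat \<Rightarrow> nat" where
  "wi N W t = card {j \<in> {1..N}. (\<Sum>i=1..j. W i) < t}"

lemma S_strict:
  fixes W :: "nat \<Rightarrow> nat" and i j N :: nat
  assumes Wpos: "\<forall>j\<in>{1..N}. W j > 0" and "i < j" "j \<le> N"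
  shows "(\<Sum>l=1..i. W l) < (\<Sum>l=1..j. W l)"
proof -
  have "{1..j} = {1..i} \<union> {i+1..j}" using assms by auto
  hence "(\<Sum>l=1..j. W l) = (\<Sum>l=1..i. W l) + (\<Sum>l=i+1..j. W l)"
    by (simp add: sum.union_disjoint ivl_disj_int)
  moreover have "(\<Sum>l=i+1..j. W l) > 0" using assms by (intro sum_pos2[of _ j]) auto
  ultimately show ?thesis by simp
qed

lemma S_mono: "i \<le> j \<Longrightarrow> (\<Sum>l=1..i. W l) \<le> (\<Sum>l=1..(j::nat). (W l :: nat))"
  by (intro sum_mono2) auto

lemma window_iff: fixes W :: "nat \<Rightarrow> nat" and j t :: nat assumes that: "j \<ge> 1"
  shows "t \<in> window W j \<longleftrightarrow> (\<Sum>i=1..j-1. W i) < t \<and> t \<le> (\<Sum>i=1..j. W i)"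
proof -
  have "{1..<j} = {1..j-1}" using that by auto
  thus ?thesis unfolding window_def by auto
qed

lemma cover:
  fixes W :: "nat \<Rightarrow> nat" and n t :: nat
  assumes "t \<in> {1..(\<Sum>i=1..n. W i)}"
  shows "\<exists>j\<in>{1..n}. t \<in> window W j"
  using assms
proof (induction n)
  case 0 then show ?case by simp
next
  case (Suc n)
  show ?case
  proof (cases "t \<le> (\<Sum>i=1..n. W i)")
    case True then show ?thesis using Suc by fastforce
  next
    case False
    hence "t \<in> window W (Suc n)" using Suc.prems by (subst window_iff) auto
    thus ?thesis by auto
  qed
qed

lemma wi_window:
  fixes W :: "nat \<Rightarrow> nat" and j t N :: nat
  assumes Wpos: "\<forall>j\<in>{1..N}. W j > 0" and j: "j \<in> {1..N}" and t: "t \<in> window W j"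
  shows "wi N W t = j - 1"
proof -
  have tw: "(\<Sum>i=1..j-1. W i) < t" "t \<le> (\<Sum>i=1..j. W i)" using t j window_iff[where j=j and W=W and t=t] by auto
  have "{i \<in> {1..N}. (\<Sum>l=1..i. W l) < t} = {1..j-1}"
  proof (intro set_eqI iffI)
    fix i assume i: "i \<in> {i \<in> {1..N}. (\<Sum>l=1..i. W l) < t}"
    show "i \<in> {1..j-1}"
    proof (rule ccontr)
      assume "i \<notin> {1..j-1}"
      hence "j \<le> i" using i by auto
      hence "(\<Sum>l=1..j. W l) \<le> (\<Sum>l=1..i. W l)" by (rule S_mono)
      thus False using i tw by auto
    qed
  next
    fix i assume i: "i \<in> {1..j-1}"
    hence "(\<Sum>l=1..i. W l) \<le> (\<Sum>l=1..j-1. W l)" by (intro S_mono) auto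
    thus "i \<in> {i \<in> {1..N}. (\<Sum>l=1..i. W l) < t}" using i tw j by auto
  qed
  thus ?thesis unfolding wi_def by simp
qed

lemma wi_mono: "t \<le> t' \<Longrightarrow> wi N W t \<le> wi N W t'"
  unfolding wi_def by (intro card_mono) auto

lemma Sj_window:
  fixes W :: "nat \<Rightarrow> nat" and j N :: nat
  assumes Wpos: "\<forall>j\<in>{1..N}. W j > 0" and j: "j \<in> {1..N}"
  shows "(\<Sum>i=1..j. W i) \<in> window W j"
proof -
  have "(\<Sum>i=1..j-1. W i) < (\<Sum>i=1..j. W i)" using j by (intro S_strict[OF Wpos]) auto
  thus ?thesis using j by (subst window_iff) auto
qed

lemma wi_props:
  fixes W :: "nat \<Rightarrow> nat" and t T N :: nat
  assumes Wpos: "\<forall>j\<in>{1..N}. W j > 0" and sumT: "(\<Sum>j=1..N. W j) = T" and t: "t \<in> {1..T}"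
  shows "wi N W t < N \<and> t \<in> window W (wi N W t + 1)"
proof -
  obtain j where j: "j \<in> {1..N}" "t \<in> window W j" using cover[where t=t and n=N and W=W] t sumT by auto
  have "wi N W t = j - 1" by (rule wi_window[OF Wpos j])
  thus ?thesis using j by auto
qed




lemma cube_root: "0 < u \<Longrightarrow> (u powr (1/3)) ^ 3 = (u::real)"
proof -
  assume u: "0 < u"
  have "(u powr (1/3)) ^ 3 = (u powr (1/3)) powr (real 3)" using u by (simp add: powr_realpow)
  also have "\<dots> = u" using u by (simp add: powr_powr)
  finally show ?thesis .
qed

lemma sq_root23: "0 < u \<Longrightarrow> u powr (2/3) = ((u::real) powr (1/3)) ^ 2"
proof -
  assume u: "0 < u"
  have "(u powr (1/3)) ^ 2 = (u powr (1/3)) powr (real 2)" using u by (simp add: powr_realpow)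
  also have "\<dots> = u powr (2/3)" using u by (simp add: powr_powr)
  finally show ?thesis by simp
qed

lemma D_ge_K:
  assumes K: "real K > 0" and V: "V > 0" and VT: "V \<le> real T / real K"
  shows "real K powr (1/3) * (real T / V) powr (2/3) \<ge> real K"
proof -
  have "real K \<le> real T / V" using VT K V by (simp add: field_simps)
  hence "real K powr (2/3) \<le> (real T / V) powr (2/3)" using K by (intro powr_mono2) auto
  hence "real K powr (1/3) * real K powr (2/3) \<le> real K powr (1/3) * (real T / V) powr (2/3)"
    by (intro mult_left_mono) auto
  moreover have "real K powr (1/3) * real K powr (2/3) = real K"
    using K by (simp add: powr_add[symmetric])
  ultimately show ?thesis by simp
qed




lemma card_window: "j \<ge> 1 \<Longrightarrow> card (window W j) = W j"
proof -
  assume j: "j \<ge> 1"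
  have "{1..j} = insert j {1..<j}" using j by auto
  hence "(\<Sum>i=1..j. W i) = (\<Sum>i=1..<j. W i) + W j" by simp
  thus ?thesis unfolding window_def by simp
qed

lemma sum_by_window:
  fixes f :: "nat \<Rightarrow> real" and W :: "nat \<Rightarrow> nat"
  assumes Wpos: "\<forall>j\<in>{1..N}. W j > 0" and sumT: "(\<Sum>j=1..N. W j) = T"
  shows "(\<Sum>t=1..T. f (wi N W t)) = (\<Sum>j=1..N. real (W j) * f (j - 1))"
proof -
  have "(\<Sum>t=1..T. f (wi N W t)) = (\<Sum>j=1..N. \<Sum>t\<in>window W j. f (wi N W t))"
    using win_sum[where n=N and W=W and f="\<lambda>t. f (wi N W t)"] sumT by simp
  also have "\<dots> = (\<Sum>j=1..N. \<Sum>t\<in>window W j. f (j - 1))"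
    by (intro sum.cong refl) (simp add: wi_window[OF Wpos])
  also have "\<dots> = (\<Sum>j=1..N. real (W j) * f (j - 1))"
    by (intro sum.cong refl) (simp add: card_window)
  finally show ?thesis .
qed

lemma case2:
  fixes K T N :: nat and V :: real and W :: "nat \<Rightarrow> nat" and \<pi> :: policy
  assumes K: "K \<ge> 2" and TK: "T \<ge> K" and V: "0 < V" and VT: "V \<le> real T / real K"
    and Wpos: "\<forall>j\<in>{1..N}. W j > 0" and sumT: "(\<Sum>j=1..N. W j) = T" and pol: "is_policy K \<pi>"
    and hyp: "\<forall>i\<in>{1..N}. real (W i) \<ge> real K powr (1/3) * (real T / V) powr (2/3)"
  shows "(1/8 - sqrt (ln (4/3)) / 8) * (\<Sum>i=1..N. sqrt (real K * real (W i))) \<le> worst_regret K T N W V \<pi>"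
proof -
  define D where "D = real K powr (1/3) * (real T / V) powr (2/3)"
  have Kp: "real K > 0" using K by simp
  have Tp: "real T > 0" using K TK by simp
  have DK: "D \<ge> real K" unfolding D_def by (rule D_ge_K[OF Kp V VT])
  have Dp: "D > 0" using DK Kp by linarith
  define x where "x = real K powr (1/3)"
  define y where "y = V powr (1/3)"
  define z where "z = real T powr (1/3)"
  have xp: "x > 0" and yp: "y > 0" and zp: "z > 0" using Kp V Tp by (auto simp: x_def y_def z_def)
  have x3: "x ^ 3 = real K" unfolding x_def by (rule cube_root[OF Kp])
  have y3: "y ^ 3 = V" unfolding y_def by (rule cube_root[OF V])
  have z3: "z ^ 3 = real T" unfolding z_def by (rule cube_root[OF Tp])
  have Dxyz: "D = x * (z / y) ^ 2"
  proof -
    have "(real T / V) powr (2/3) = ((real T / V) powr (1/3)) ^ 2" using Tp V by (intro sq_root23) auto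
    also have "(real T / V) powr (1/3) = z / y" unfolding z_def y_def using Tp V by (simp add: powr_divide)
    finally show ?thesis unfolding D_def x_def by simp
  qed
  define emax where "emax = x * y / (4 * z)"
  have sKD: "sqrt (real K / D) = x * y / z"
  proof -
    have "real K / D = (x * y / z) ^ 2" unfolding Dxyz x3[symmetric] using xp yp zp
      by (simp add: field_simps power2_eq_square power3_eq_cube)
    thus ?thesis using xp yp zp by simp
  qed
  define eps where "eps m = (if m < N then sqrt (real K / real (W (m+1))) / 4 else 1/4)" for m
  have WD: "m < N \<Longrightarrow> real (W (m+1)) \<ge> D" for m using hyp unfolding D_def by auto
  have epos: "0 < eps m" for m unfolding eps_def using Kp Wpos by auto
  have ele: "eps m \<le> 1/4" for m
  proof (cases "m < N")
    case True
    have "real K / real (W (m+1)) \<le> 1" using WD[OF True] DK by (simp add: divide_le_eq)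
    thus ?thesis using True unfolding eps_def by simp
  qed (simp add: eps_def)
  have emx: "eps m \<le> emax" if "m < N" for m
  proof -
    have "real K / real (W (m+1)) \<le> real K / D" using WD[OF that] Dp Kp by (intro divide_left_mono) auto
    hence "sqrt (real K / real (W (m+1))) \<le> sqrt (real K / D)" by (rule real_sqrt_le_mono)
    thus ?thesis using that unfolding eps_def emax_def sKD by simp
  qed
  have small: "16 * (eps m)\<^sup>2 * real (card (blockset T (wi N W) m)) \<le> real K" for m
  proof (cases "m < N")
    case True
    have sub: "blockset T (wi N W) m \<subseteq> window W (m+1)"
      using wi_props[OF Wpos sumT] unfolding blockset_def by auto
    have "card (blockset T (wi N W) m) \<le> W (m+1)"
    proof -
      have fw: "finite (window W (m+1))" by (simp add: window_def)
      show ?thesis using card_mono[OF fw sub] card_window[of "m+1" W] by simp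
    qed
    moreover have Wm: "real (W (m+1)) > 0" using Wpos True by auto
    moreover have "16 * (eps m)\<^sup>2 = real K / real (W (m+1))"
      using True Kp Wm unfolding eps_def by (simp add: power_divide)
    ultimately show ?thesis using Kp
      by (simp add: divide_le_eq)
  next
    case False
    have "blockset T (wi N W) m = {}"
      using wi_props[OF Wpos sumT] False unfolding blockset_def by fastforce
    thus ?thesis by simp
  qed
  have const: "wi N W t = wi N W (\<Sum>i=1..j. W i)" if "j \<in> {1..N}" "t \<in> window W j" for j t
    using wi_window[OF Wpos that] wi_window[OF Wpos that(1) Sj_window[OF Wpos that(1)]] by simp
  have ND: "real N * D \<le> real T"
  proof -
    have "(\<Sum>j=1..N. D) \<le> (\<Sum>j=1..N. real (W j))" using hyp unfolding D_def by (intro sum_mono) auto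
    thus ?thesis using sumT by (simp flip: of_nat_sum)
  qed
  have var: "(\<Sum>t=1..<T. if wi N W t \<noteq> wi N W (t+1) then eps (wi N W t) + eps (wi N W (t+1)) else 0) \<le> V"
  proof -
    have "(\<Sum>t=1..<T. if wi N W t \<noteq> wi N W (t+1) then eps (wi N W t) + eps (wi N W (t+1)) else 0)
       \<le> (\<Sum>t=1..<T. if wi N W t \<noteq> wi N W (t+1) then 2 * emax else 0)"
    proof (rule sum_mono)
      fix t assume t: "t \<in> {1..<T}"
      have "wi N W t < N" "wi N W (t+1) < N" using wi_props[OF Wpos sumT] t by auto
      hence "eps (wi N W t) \<le> emax" "eps (wi N W (t+1)) \<le> emax" using emx by auto
      thus "(if wi N W t \<noteq> wi N W (t+1) then eps (wi N W t) + eps (wi N W (t+1)) else 0)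
         \<le> (if wi N W t \<noteq> wi N W (t+1) then 2 * emax else 0)" by simp
    qed
    also have "\<dots> \<le> 2 * emax * real (wi N W T - wi N W 1)"
      by (rule varcount) (auto simp: wi_mono emax_def xp yp zp less_imp_le)
    also have "\<dots> \<le> 2 * emax * real N"
    proof -
      have "wi N W T < N" using wi_props[OF Wpos sumT, of T] TK K by auto
      thus ?thesis using xp yp zp by (intro mult_left_mono) (auto simp: emax_def)
    qed
    also have "\<dots> \<le> 2 * emax * (real T / D)"
      using ND Dp xp yp zp by (intro mult_left_mono) (auto simp: emax_def field_simps)
    also have "\<dots> = V / 2"
      unfolding emax_def Dxyz z3[symmetric] y3[symmetric] using xp yp zp
      by (simp add: field_simps power2_eq_square power3_eq_cube)
    finally show ?thesis using V by linarith
  qed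
  have mono: "\<And>t t'. 1 \<le> t \<Longrightarrow> t \<le> t' \<Longrightarrow> t' \<le> T \<Longrightarrow> wi N W t \<le> wi N W t'"
    by (rule wi_mono)
  have G: "(\<Sum>t=1..T. eps (wi N W t) * ((1 - sqrt (ln (4/3))) / 2)) \<le> worst_regret K T N W V \<pi>"
    by (rule general[OF K pol mono epos ele small Wpos sumT const var])
  have "(\<Sum>t=1..T. eps (wi N W t) * ((1 - sqrt (ln (4/3))) / 2)) =
        (\<Sum>j=1..N. real (W j) * (eps (j - 1) * ((1 - sqrt (ln (4/3))) / 2)))"
    by (rule sum_by_window[OF Wpos sumT])
  also have "\<dots> = (1/8 - sqrt (ln (4/3)) / 8) * (\<Sum>i=1..N. sqrt (real K * real (W i)))"
    unfolding sum_distrib_left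
  proof (intro sum.cong refl)
    fix j assume j: "j \<in> {1..N}"
    have Wj: "real (W j) > 0" using Wpos j by auto
    have e: "eps (j - 1) = sqrt (real K / real (W j)) / 4" using j unfolding eps_def by auto
    have "real (W j) * sqrt (real K / real (W j)) = sqrt (real K * real (W j))"
    proof -
      have "real (W j) = sqrt (real (W j)) * sqrt (real (W j))" using Wj by simp
      hence "real (W j) * sqrt (real K / real (W j)) = sqrt (real (W j)) * (sqrt (real (W j)) * sqrt (real K / real (W j)))"
        by (simp add: mult.assoc)
      also have "sqrt (real (W j)) * sqrt (real K / real (W j)) = sqrt (real K)"
        using Wj by (simp add: real_sqrt_mult[symmetric])
      finally show ?thesis by (simp add: real_sqrt_mult)
    qed
    thus "real (W j) * (eps (j - 1) * ((1 - sqrt (ln (4/3))) / 2)) =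
          (1/8 - sqrt (ln (4/3)) / 8) * sqrt (real K * real (W j))"
      unfolding e by (simp add: field_simps)
  qed
  finally show ?thesis using G by simp
qed




lemma card_block1:
  fixes D :: real and m :: nat and B :: "nat set"
  assumes D: "D \<ge> 1" and sub: "\<And>t. t \<in> B \<Longrightarrow> real m * D < real t \<and> real t < real m * D + 2 * D"
  shows "real (card B) \<le> 3 * D"
proof -
  define A where "A = nat \<lfloor>real m * D\<rfloor>"
  define C where "C = nat \<lfloor>2 * D\<rfloor> + 1"
  have A: "real A = of_int \<lfloor>real m * D\<rfloor>" unfolding A_def using D by simp
  have C: "real C = of_int \<lfloor>2 * D\<rfloor> + 1" unfolding C_def using D by simp
  have "B \<subseteq> {A+1..A+C}"
  proof
    fix t assume t: "t \<in> B"
    have f1: "of_int \<lfloor>real m * D\<rfloor> \<le> real m * D" by (rule of_int_floor_le)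
    have f2: "real m * D < of_int \<lfloor>real m * D\<rfloor> + 1" by (rule real_of_int_floor_add_one_gt)
    have "real A < real t" using sub[OF t] A f1 by linarith
    hence l: "A + 1 \<le> t" by simp
    have "real t - real A - 1 < 2 * D" using sub[OF t] A f2 by linarith
    hence "of_int (int t - int A - 1) < 2 * D" by simp
    hence "int t - int A - 1 \<le> \<lfloor>2 * D\<rfloor>" by (simp add: le_floor_iff)
    hence "real t \<le> real A + real C" using C by linarith
    hence "t \<le> A + C" by linarith
    thus "t \<in> {A+1..A+C}" using l by simp
  qed
  hence "card B \<le> card {A+1..A+C}" by (intro card_mono) auto
  hence "real (card B) \<le> real C" by simp
  also have "\<dots> \<le> 2 * D + 1" using C of_int_floor_le[of "2*D"] by linarith
  also have "\<dots> \<le> 3 * D" using D by simp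
  finally show ?thesis .
qed

lemma case1:
  fixes K T N :: nat and V :: real and W :: "nat \<Rightarrow> nat" and \<pi> :: policy
  assumes K: "K \<ge> 2" and TK: "T \<ge> K" and V: "0 < V" and VT: "V \<le> real T / real K"
    and Wpos: "\<forall>j\<in>{1..N}. W j > 0" and sumT: "(\<Sum>j=1..N. W j) = T" and pol: "is_policy K \<pi>"
    and hyp: "\<forall>i\<in>{1..N}. real (W i) \<le> real K powr (1/3) * (real T / V) powr (2/3)"
  shows "(1/8 - sqrt (ln (4/3)) / 8) / 3 * (real K * V) powr (1/3) * real T powr (2/3) \<le> worst_regret K T N W V \<pi>"
proof -
  define D where "D = real K powr (1/3) * (real T / V) powr (2/3)"
  have Kp: "real K > 0" using K by simp
  have Tp: "real T > 0" using K TK by simp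
  have DK: "D \<ge> real K" unfolding D_def by (rule D_ge_K[OF Kp V VT])
  have D1: "D \<ge> 1" using DK K by linarith
  have Dp: "D > 0" using D1 by linarith
  define x where "x = real K powr (1/3)"
  define y where "y = V powr (1/3)"
  define z where "z = real T powr (1/3)"
  have xp: "x > 0" and yp: "y > 0" and zp: "z > 0" using Kp V Tp by (auto simp: x_def y_def z_def)
  have x3: "x ^ 3 = real K" unfolding x_def by (rule cube_root[OF Kp])
  have y3: "y ^ 3 = V" unfolding y_def by (rule cube_root[OF V])
  have z3: "z ^ 3 = real T" unfolding z_def by (rule cube_root[OF Tp])
  have Dxyz: "D = x * (z / y) ^ 2"
  proof -
    have "(real T / V) powr (2/3) = ((real T / V) powr (1/3)) ^ 2" using Tp V by (intro sq_root23) auto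
    also have "(real T / V) powr (1/3) = z / y" unfolding z_def y_def using Tp V by (simp add: powr_divide)
    finally show ?thesis unfolding D_def x_def by simp
  qed
  define a where "a = x * y / z"
  have ap: "a > 0" unfolding a_def using xp yp zp by simp
  have a3: "a ^ 3 = real K * V / real T" unfolding a_def x3[symmetric] y3[symmetric] z3[symmetric]
    by (simp add: power_divide power_mult_distrib)
  have a1: "a \<le> 1"
  proof (rule ccontr)
    assume "\<not> a \<le> 1"
    hence "1 < a ^ 3" by (intro one_less_power) auto
    moreover have "real K * V / real T \<le> 1" using VT Kp Tp by (simp add: field_simps)
    ultimately show False using a3 by simp
  qed
  have a2D: "a ^ 2 * D = real K" unfolding a_def Dxyz x3[symmetric] using xp yp zp
    by (simp add: field_simps power2_eq_square power3_eq_cube)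
  have aTD: "a * real T = V * D" unfolding a_def Dxyz z3[symmetric] y3[symmetric] using xp yp zp
    by (simp add: field_simps power2_eq_square power3_eq_cube)
  define S where "S j = (\<Sum>i=1..j. W i)" for j
  define blk where "blk t = nat \<lfloor>real (S (wi N W t)) / D\<rfloor>" for t
  define eps where "eps m = a / 12" for m :: nat
  have epos: "0 < eps m" for m unfolding eps_def using ap by simp
  have ele: "eps m \<le> 1/4" for m unfolding eps_def using a1 by simp
  have mono: "blk t \<le> blk t'" if "1 \<le> t" "t \<le> t'" "t' \<le> T" for t t'
  proof -
    have "S (wi N W t) \<le> S (wi N W t')" unfolding S_def by (intro S_mono wi_mono that)
    hence "real (S (wi N W t)) / D \<le> real (S (wi N W t')) / D" using Dp by (intro divide_right_mono) auto
    thus ?thesis unfolding blk_def by (intro nat_mono floor_mono)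
  qed
  have small: "16 * (eps m)\<^sup>2 * real (card (blockset T blk m)) \<le> real K" for m
  proof -
    have cb: "real (card (blockset T blk m)) \<le> 3 * D"
    proof (rule card_block1[OF D1])
      fix t assume t: "t \<in> blockset T blk m"
      hence tT: "t \<in> {1..T}" and bm: "blk t = m" unfolding blockset_def by auto
      define r where "r = wi N W t"
      have rN: "r < N" and tw: "t \<in> window W (r+1)" using wi_props[OF Wpos sumT tT] unfolding r_def by auto
      have tw2: "S r < t" "t \<le> S r + W (r+1)"
        using tw window_iff[where j="r+1" and W=W and t=t] unfolding S_def by auto
      have WD: "real (W (r+1)) \<le> D" using hyp rN unfolding D_def by auto
      have fl: "m = nat \<lfloor>real (S r) / D\<rfloor>" using bm unfolding blk_def r_def by simp
      have q0: "0 \<le> real (S r) / D" using Dp by simp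
      have nq: "real m = of_int \<lfloor>real (S r) / D\<rfloor>" using fl q0 by simp
      have "real m \<le> real (S r) / D" using nq of_int_floor_le[of "real (S r) / D"] by linarith
      hence l: "real m * D \<le> real (S r)" using Dp by (simp add: field_simps)
      have "real (S r) / D < real m + 1" using nq real_of_int_floor_add_one_gt[of "real (S r) / D"] by linarith
      hence u: "real (S r) < (real m + 1) * D" using Dp by (simp add: field_simps)
      show "real m * D < real t \<and> real t < real m * D + 2 * D"
      proof
        show "real m * D < real t" using l tw2(1) by (metis of_nat_less_iff order_le_less_trans)
        have "real t \<le> real (S r) + real (W (r+1))" using tw2(2) by (metis of_nat_add of_nat_le_iff)
        thus "real t < real m * D + 2 * D" using u WD by (simp add: algebra_simps)
      qed
    qed
    have "16 * (eps m)\<^sup>2 * real (card (blockset T blk m)) \<le> 16 * (eps m)\<^sup>2 * (3 * D)"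
      by (intro mult_left_mono cb) auto
    also have "\<dots> = a ^ 2 * D / 3" unfolding eps_def by (simp add: power2_eq_square)
    also have "\<dots> \<le> real K" using a2D Kp by simp
    finally show ?thesis .
  qed
  have const: "blk t = blk (\<Sum>i=1..j. W i)" if "j \<in> {1..N}" "t \<in> window W j" for j t
    using wi_window[OF Wpos that] wi_window[OF Wpos that(1) Sj_window[OF Wpos that(1)]] unfolding blk_def by simp
  have var: "(\<Sum>t=1..<T. if blk t \<noteq> blk (t+1) then eps (blk t) + eps (blk (t+1)) else 0) \<le> V"
  proof -
    have "(\<Sum>t=1..<T. if blk t \<noteq> blk (t+1) then eps (blk t) + eps (blk (t+1)) else 0)
       = (\<Sum>t=1..<T. if blk t \<noteq> blk (t+1) then a / 6 else 0)"
      unfolding eps_def by (intro sum.cong refl) (auto split: if_splits)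
    also have "\<dots> \<le> a / 6 * real (blk T - blk 1)"
      by (rule varcount) (use mono ap in auto)
    also have "\<dots> \<le> a / 6 * (real T / D)"
    proof -
      have "real (blk T - blk 1) \<le> real (blk T)" by simp
      also have "\<dots> \<le> real (S (wi N W T)) / D"
      proof -
        have "0 \<le> real (S (wi N W T)) / D" using Dp by simp
        thus ?thesis unfolding blk_def using of_int_floor_le[of "real (S (wi N W T)) / D"] by linarith
      qed
      also have "\<dots> \<le> real T / D"
      proof -
        have "wi N W T < N" using wi_props[OF Wpos sumT, of T] TK K by auto
        hence "S (wi N W T) \<le> S N" unfolding S_def by (intro S_mono) auto
        hence "S (wi N W T) \<le> T" using sumT unfolding S_def by simp
        hence "real (S (wi N W T)) \<le> real T" by (simp only: of_nat_le_iff)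
        thus ?thesis using Dp by (intro divide_right_mono) auto
      qed
      finally show ?thesis using ap by (intro mult_left_mono) auto
    qed
    also have "\<dots> = V / 6" using aTD Dp by (simp add: field_simps)
    finally show ?thesis using V by linarith
  qed
  have G: "(\<Sum>t=1..T. eps (blk t) * ((1 - sqrt (ln (4/3))) / 2)) \<le> worst_regret K T N W V \<pi>"
    by (rule general[OF K pol mono epos ele small Wpos sumT const var])
  have "(\<Sum>t=1..T. eps (blk t) * ((1 - sqrt (ln (4/3))) / 2)) = real T * (a / 12) * ((1 - sqrt (ln (4/3))) / 2)"
    unfolding eps_def by simp
  also have "\<dots> = (1/8 - sqrt (ln (4/3)) / 8) / 3 * (real K * V) powr (1/3) * real T powr (2/3)"
  proof -
    have "(real K * V) powr (1/3) = x * y" unfolding x_def y_def using Kp V by (simp add: powr_mult)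
    moreover have "real T powr (2/3) = z ^ 2" unfolding z_def using Tp by (rule sq_root23)
    moreover have "real T * a = x * y * z ^ 2" unfolding a_def z3[symmetric] using zp
      by (simp add: field_simps power2_eq_square power3_eq_cube)
    ultimately show ?thesis by (simp add: field_simps)
  qed
  finally show ?thesis using G by simp
qed


theorem theorem2:
  fixes K T N :: nat and V :: real and W :: "nat \<Rightarrow> nat" and \<pi> :: policy
  assumes "K \<ge> 2" and "T \<ge> K"
    and "0 < V" and "V \<le> real T / real K"
    and "\<forall>j\<in>{1..N}. W j > 0" and "(\<Sum>j=1..N. W j) = T"
    and "is_policy K \<pi>"
  shows "(let c = 1/8 - sqrt (ln (4/3)) / 8 in
          ((\<forall>i\<in>{1..N}. real (W i) \<le> real K powr (1/3) * (real T / V) powr (2/3)) \<longrightarrow>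
             worst_regret K T N W V \<pi> \<ge> c / 3 * (real K * V) powr (1/3) * real T powr (2/3))
          \<and>
          ((\<forall>i\<in>{1..N}. real (W i) \<ge> real K powr (1/3) * (real T / V) powr (2/3)) \<longrightarrow>
             worst_regret K T N W V \<pi> \<ge> c * (\<Sum>i=1..N. sqrt (real K * real (W i)))))"
  proof -
  have c1: "(1/8 - sqrt (ln (4/3)) / 8) / 3 * (real K * V) powr (1/3) * real T powr (2/3) \<le> worst_regret K T N W V \<pi>"
    if "\<forall>i\<in>{1..N}. real (W i) \<le> real K powr (1/3) * (real T / V) powr (2/3)"
    by (rule case1) (use assms that in auto)
  have c2: "(1/8 - sqrt (ln (4/3)) / 8) * (\<Sum>i=1..N. sqrt (real K * real (W i))) \<le> worst_regret K T N W V \<pi>"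
    if "\<forall>i\<in>{1..N}. real (W i) \<ge> real K powr (1/3) * (real T / V) powr (2/3)"
    by (rule case2) (use assms that in auto)
  show ?thesis unfolding Let_def using c1 c2 by blast
qed

end
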